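(* Let $(X,\mu)$ be a non-atomic probability measure space equipped with a tree $\mathcal{T}$, and let $\mathcal{M}_{\mathcal{T}}$ be the associated dyadic maximal operator. Let $0<q<1$ and let $f,h$ be real numbers with $0<h\le f^q$. Define $$B_q(f,h)=\sup\Big\{\int_X (\mathcal{M}_{\mathcal{T}}\phi)^q\,d\mu \;:\; \phi\in L^1(X,\mu),\ \phi\ge 0,\ \int_X\phi\,d\mu=f,\ \int_X\phi^q\,d\mu=h\Big\}.$$ Then $B_q(f,h)=h\,\omega_q(f^q/h)$, where $\omega_q:[1,+\infty)\to[1,+\infty)$ is defined by $\omega_q(z)=[H_q^{-1}(z)]^q$ and $H_q(z)=(1-q)z^q+qz^{q-1}$ for $z\ge 1$.
   Context: A set $\mathcal{T}$ of measurable subsets of $X$ is a tree if: (i) $X\in\mathcal{T}$ and $\mu(I)>0$ for every $I\in\mathcal{T}$; (ii) for every $I\in\mathcal{T}$ there is a finite or countable set $C(I)\subseteq\mathcal{T}$ with at least two elements, consisting of pairwise disjoint subsets of $I$ whose union is $I$; (iii) $\mathcal{T}=\bigcup_{m\ge0}\mathcal{T}_{(m)}$ where $\mathcal{T}_{(0)}=\{X\}$ and $\mathcal{T}_{(m+1)}=\bigcup_{I\in\mathcal{T}_{(m)}}C(I)$; (iv) $\lim_{m\to\infty}\sup_{I\in\mathcal{T}_{(m)}}\mu(I)=0$. The dyadic maximal operator is $\mathcal{M}_{\mathcal{T}}\phi(x)=\sup\{\frac{1}{\mu(I)}\int_I|\phi|\,d\mu : x\in I\in\mathcal{T}\}$ for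 $\phi\in L^1(X,\mu)$. The function $H_q$ is a strictly increasing bijection of $[1,\infty)$ onto $[1,\infty)$, so $H_q^{-1}$ is well defined. *)

theory Defs
  imports "HOL-Probability.Probability"
begin

definition nonatomic :: "'a measure \<Rightarrow> bool" where
  "nonatomic M \<longleftrightarrow> (\<forall>A\<in>sets M. measure M A > 0 \<longrightarrow>
      (\<exists>B\<in>sets M. B \<subseteq> A \<and> 0 < measure M B \<and> measure M B < measure M A))"

primrec tree_level :: "'a set \<Rightarrow> ('a set \<Rightarrow> 'a set set) \<Rightarrow> nat \<Rightarrow> 'a set set" where
  "tree_level X C 0 = {X}"
| "tree_level X C (Suc m) = (\<Union>I\<in>tree_level X C m. C I)"

definition tree_with :: "'a measure \<Rightarrow> 'a set set \<Rightarrow> ('a set \<Rightarrow> 'a set set) \<Rightarrow> bool" where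
  "tree_with M T C \<longleftrightarrow>
     space M \<in> T \<and>
     (\<forall>I\<in>T. I \<in> sets M \<and> measure M I > 0) \<and>
     (\<forall>I\<in>T. C I \<subseteq> T \<and> countable (C I) \<and> (\<exists>J\<in>C I. \<exists>K\<in>C I. J \<noteq> K) \<and>
             pairwise disjnt (C I) \<and> (\<forall>J\<in>C I. J \<subseteq> I) \<and> \<Union>(C I) = I) \<and>
     T = (\<Union>m. tree_level (space M) C m) \<and>
     (\<lambda>m. SUP I\<in>tree_level (space M) C m. measure M I) \<longlonglongrightarrow> 0"

definition is_tree :: "'a measure \<Rightarrow> 'a set set \<Rightarrow> bool" where
  "is_tree M T \<longleftrightarrow> (\<exists>C. tree_with M T C)"

text \<open>Dyadic maximal operator, valued in the extended nonnegative reals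
(the supremum may be infinite on a null set).\<close>
definition dyadic_max :: "'a measure \<Rightarrow> 'a set set \<Rightarrow> ('a \<Rightarrow> real) \<Rightarrow> 'a \<Rightarrow> ennreal" where
  "dyadic_max M T \<phi> x =
     (SUP I\<in>{I\<in>T. x \<in> I}. ennreal (1 / measure M I) * (\<integral>\<^sup>+ y\<in>I. ennreal \<bar>\<phi> y\<bar> \<partial>M))"

definition ennpow :: "ennreal \<Rightarrow> real \<Rightarrow> ennreal" where
  "ennpow a q = (if a = \<top> then \<top> else ennreal (enn2real a powr q))"

definition Bellman_q :: "'a measure \<Rightarrow> 'a set set \<Rightarrow> real \<Rightarrow> real \<Rightarrow> real \<Rightarrow> ennreal" where
  "Bellman_q M T q f h =
     (SUP \<phi>\<in>{\<phi>. integrable M \<phi> \<and> (\<forall>x\<in>space M. \<phi> x \<ge> 0) \<and>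
                (\<integral>x. \<phi> x \<partial>M) = f \<and> (\<integral>x. \<phi> x powr q \<partial>M) = h}.
        \<integral>\<^sup>+ x. ennpow (dyadic_max M T \<phi> x) q \<partial>M)"

definition H_q :: "real \<Rightarrow> real \<Rightarrow> real" where
  "H_q q z = (1 - q) * z powr q + q * z powr (q - 1)"

definition omega_q :: "real \<Rightarrow> real \<Rightarrow> real" where
  "omega_q q z = (the_inv_into {1..} (H_q q) z) powr q"

end

theory Submission
  imports Defs
begin


lemma bern_conc:
  fixes q v :: real
  assumes "0 < q" "q < 1" "0 \<le> v"
  shows "v powr q \<le> q * v + (1 - q)"
proof (cases "v = 0")
  case True then show ?thesis using assms by simp
next
  case False
  then show ?thesis
    using Youngs_inequality_0[of q "1-q" v 1] assms by simp
qed

lemma tangent_powr: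
  fixes q x x0 :: real
  assumes "0 < q" "q < 1" "0 \<le> x" "0 < x0"
  shows "x powr q \<le> q * x0 powr (q - 1) * x + (1 - q) * x0 powr q"
proof -
  have "(x / x0) powr q \<le> q * (x / x0) + (1 - q)"
    using bern_conc[of q "x/x0"] assms by simp
  then have "x0 powr q * (x / x0) powr q \<le> x0 powr q * (q * (x / x0) + (1 - q))"
    by (intro mult_left_mono) auto
  moreover have "x0 powr q * (x / x0) powr q = x powr q"
    using assms by (simp add: powr_divide)
  moreover have "x0 powr q * (q * (x / x0) + (1 - q)) = q * x0 powr (q - 1) * x + (1 - q) * x0 powr q"
    using assms by (simp add: powr_diff field_simps)
  ultimately show ?thesis by simp
qed

lemma taylor_powr:
  fixes q r :: real
  assumes "0 < q" "q < 1" "1 \<le> r"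
  shows "1 + q * (r - 1) - q * (1 - q) / 2 * (r - 1)^2 \<le> r powr q"
proof -
  define D' where "D' = (\<lambda>x::real. q * x powr (q - 1) - q + q * (1 - q) * (x - 1))"
  define D where "D = (\<lambda>x::real. x powr q - 1 - q * (x - 1) + q * (1 - q) / 2 * (x - 1)^2)"
  have D'mono: "D' 1 \<le> D' x" if "1 \<le> x" for x
  proof (rule DERIV_nonneg_imp_nondecreasing[OF that])
    fix y assume y: "1 \<le> y" "y \<le> x"
    have der: "DERIV D' y :> q * ((q - 1) * y powr (q - 1 - 1)) + q * (1 - q)"
      unfolding D'_def using y
      by (auto intro!: derivative_eq_intros)
    have "y powr (q - 1 - 1) \<le> 1"
      using y assms powr_mono2'[of "q-1-1" 1 y] by simp
    moreover have "q * ((q - 1) * y powr (q - 1 - 1)) + q * (1 - q) = q * (1 - q) * (1 - y powr (q - 1 - 1))"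
      by (simp add: algebra_simps)
    ultimately have "0 \<le> q * ((q - 1) * y powr (q - 1 - 1)) + q * (1 - q)"
      using assms by (simp add: mult_nonneg_nonneg)
    with der show "\<exists>d. DERIV D' y :> d \<and> 0 \<le> d" by blast
  qed
  have "D 1 \<le> D r"
  proof (rule DERIV_nonneg_imp_nondecreasing[OF assms(3)])
    fix y assume y: "1 \<le> y" "y \<le> r"
    have "DERIV D y :> D' y"
      unfolding D_def D'_def using y
      by (auto intro!: derivative_eq_intros simp: power2_eq_square)
    moreover have "0 \<le> D' y" using D'mono[of y] y by (simp add: D'_def)
    ultimately show "\<exists>d. DERIV D y :> d \<and> 0 \<le> d" by blast
  qed
  then show ?thesis by (simp add: D_def)
qed


lemma H_one: "H_q q 1 = 1"
  by (simp add: H_q_def)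

lemma H_lower:
  assumes "0 < q" "q < 1" "1 \<le> z"
  shows "(1 - q) * z powr q \<le> H_q q z"
  using assms by (simp add: H_q_def)

lemma H_strict:
  assumes "0 < q" "q < 1" "1 \<le> a" "a < b"
  shows "H_q q a < H_q q b"
proof (rule DERIV_pos_imp_increasing_open[OF assms(4)])
  fix x assume x: "a < x" "x < b"
  then have x1: "1 < x" using assms by simp
  have "DERIV (H_q q) x :> (1 - q) * (q * x powr (q - 1)) + q * ((q - 1) * x powr (q - 1 - 1))"
    unfolding H_q_def[abs_def] using x1
    by (auto intro!: derivative_eq_intros)
  moreover have "x powr (q - 1 - 1) < x powr (q - 1)"
    using x1 by (intro powr_less_mono) auto
  then have "0 < (1 - q) * (q * x powr (q - 1)) + q * ((q - 1) * x powr (q - 1 - 1))"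
  proof -
    assume l: "x powr (q - 1 - 1) < x powr (q - 1)"
    have "(1 - q) * (q * x powr (q - 1)) + q * ((q - 1) * x powr (q - 1 - 1))
        = q * (1 - q) * (x powr (q - 1) - x powr (q - 1 - 1))"
      by (simp add: algebra_simps)
    also have "\<dots> > 0" using assms l by simp
    finally show ?thesis .
  qed
  ultimately show "\<exists>y. DERIV (H_q q) x :> y \<and> 0 < y" by blast
next
  show "continuous_on {a..b} (H_q q)"
    unfolding H_q_def[abs_def] using assms
    by (intro continuous_intros) auto
qed

lemma H_mono_iff:
  assumes "0 < q" "q < 1" "1 \<le> a" "1 \<le> b"
  shows "H_q q a < H_q q b \<longleftrightarrow> a < b"
  using H_strict[OF assms(1,2,3)] H_strict[OF assms(1,2,4)] assms
  by (metis less_le_not_le linorder_less_linear)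

lemma H_surj:
  assumes "0 < q" "q < 1" "1 \<le> u"
  shows "\<exists>z\<ge>1. H_q q z = u"
proof -
  define b where "b = max 1 ((u / (1 - q)) powr (1 / q))"
  have b1: "1 \<le> b" by (simp add: b_def)
  have "u = (1 - q) * ((u / (1 - q)) powr (1 / q)) powr q"
    using assms by (simp add: powr_powr)
  also have "\<dots> \<le> (1 - q) * b powr q"
    using assms by (intro mult_left_mono powr_mono2) (auto simp: b_def)
  also have "\<dots> \<le> H_q q b" using H_lower[OF assms(1,2) b1] .
  finally have ub: "u \<le> H_q q b" .
  have "\<exists>z. 1 \<le> z \<and> z \<le> b \<and> H_q q z = u"
    using assms b1 ub
    by (intro IVT') (auto simp: H_one H_q_def[abs_def] intro!: continuous_intros)
  then show ?thesis by blast
qed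

lemma omega_eq:
  assumes "0 < q" "q < 1" "1 \<le> z" "H_q q z = u"
  shows "omega_q q u = z powr q"
proof -
  have "inj_on (H_q q) {1..}"
    using H_strict[OF assms(1,2)] by (intro inj_onI) (metis atLeast_iff linorder_neq_iff)
  then have "the_inv_into {1..} (H_q q) u = z"
    using assms by (intro the_inv_into_f_eq) auto
  then show ?thesis by (simp add: omega_q_def)
qed


lemma upper_algebra:
  fixes q f h L P :: real
  assumes q: "0 < q" "q < 1" and f: "0 < f" and h: "0 < h" and hf: "h \<le> f powr q"
    and L: "0 \<le> L"
    and U: "(1 - q) * L + q * P \<le> f powr q"
    and Y: "\<And>x0. 0 < x0 \<Longrightarrow> h \<le> q * x0 powr (q - 1) * P + (1 - q) * x0 powr q * L"
  shows "L \<le> h * omega_q q (f powr q / h)"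
proof -
  define u where "u = f powr q / h"
  have u1: "1 \<le> u" using hf h by (simp add: u_def)
  obtain z where z: "1 \<le> z" "H_q q z = u" using H_surj[OF q u1] by blast
  have om: "omega_q q u = z powr q" using omega_eq[OF q z] .
  have fq: "f powr q = h * u" using h by (simp add: u_def)
  have Y2: "h \<le> x powr (q - 1) * (f powr q - (1 - q) * L) + (1 - q) * x powr q * L" if "0 < x" for x
  proof -
    have "q * x powr (q - 1) * P = x powr (q - 1) * (q * P)" by simp
    also have "\<dots> \<le> x powr (q - 1) * (f powr q - (1 - q) * L)"
      using U by (intro mult_left_mono) auto
    finally show ?thesis using Y[OF that] by linarith
  qed
  show ?thesis
  proof (cases "z = 1")
    case False
    then have z1: "1 < z" using z by simp
    define A where "A = z powr (1 - q)"
    define B where "B = z powr q"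
    have A: "0 < A" and B: "0 < B" using z1 by (auto simp: A_def B_def)
    have AB: "A * B = z" using z1 by (simp add: A_def B_def flip: powr_add)
    have x1: "(1 / z) powr (q - 1) = A" using z1
      by (simp add: A_def powr_divide) (metis minus_diff_eq powr_minus_divide)
    have x2: "(1 / z) powr q = 1 / B" using z1 by (simp add: B_def powr_divide)
    have "h \<le> A * (f powr q - (1 - q) * L) + (1 - q) * (1 / B) * L"
      using Y2[of "1/z"] z1 x1 x2 by simp
    then have "h * B \<le> B * (A * (f powr q - (1 - q) * L) + (1 - q) * (1 / B) * L)"
      using B by (simp add: mult.commute)
    also have "\<dots> = z * f powr q - (1 - q) * L * (z - 1)"
      using B by (simp add: AB[symmetric] field_simps)
    finally have i1: "h * B \<le> z * f powr q - (1 - q) * L * (z - 1)" .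
    have Hz: "H_q q z = (1 - q) * B + q * B / z"
      using z1 by (simp add: H_q_def B_def powr_diff)
    have uz: "u * z = B * ((1 - q) * z + q)"
      using z(2) Hz z1 by (simp add: field_simps)
    have "z * f powr q = h * (u * z)" by (simp add: fq)
    also have "\<dots> = h * B * ((1 - q) * z + q)" by (simp add: uz)
    finally have "z * f powr q = h * B * ((1 - q) * z + q)" .
    with i1 have "(1 - q) * (z - 1) * L \<le> (1 - q) * (z - 1) * (h * B)"
      by (simp add: algebra_simps)
    then have "L \<le> h * B"
      using q z1 by (simp add: mult_le_cancel_left)
    then show ?thesis by (simp add: u_def[symmetric] om B_def)
  next
    case True
    then have u_1: "u = 1" using z H_one by simp
    then have fh: "f powr q = h" using fq by simp
    have om1: "omega_q q u = 1" using om True by simp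
    show ?thesis
    proof (rule ccontr)
      assume "\<not> ?thesis"
      then have Lh: "h < L" using om1 by (simp add: u_def[symmetric])
      define g where "g = (\<lambda>x::real. (1 - q) * L * (x powr (q - 1) - x powr q) - (x powr (q - 1) - 1) * h)"
      have gle: "g x \<le> 0" if "0 < x" for x
        using Y2[OF that] fh by (simp add: g_def algebra_simps)
      have der: "DERIV g 1 :> (1 - q) * L * ((q - 1) - q) - (q - 1) * h"
        unfolding g_def by (auto intro!: derivative_eq_intros)
      have neg: "(1 - q) * L * ((q - 1) - q) - (q - 1) * h < 0"
      proof -
        have "(1 - q) * L * ((q - 1) - q) - (q - 1) * h = (1 - q) * (h - L)"
          by (simp add: algebra_simps)
        also have "\<dots> < 0" using q Lh by (simp add: mult_pos_neg)
        finally show ?thesis .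
      qed
      obtain d where d: "d > 0" "\<And>e. e > 0 \<Longrightarrow> e < d \<Longrightarrow> g 1 < g (1 - e)"
        using DERIV_neg_dec_left[OF der neg] by blast
      define e where "e = min (d / 2) (1 / 2)"
      have "g 1 < g (1 - e)" using d by (intro d(2)) (auto simp: e_def)
      moreover have "g 1 = 0" by (simp add: g_def)
      moreover have "g (1 - e) \<le> 0" by (intro gle) (auto simp: e_def)
      ultimately show False by simp
    qed
  qed
qed


lemma g_lower:
  fixes q b r :: real
  assumes q: "0 < q" "q < 1" and b: "0 < b" "b < 1" and r: "1 \<le> r" "r * b \<le> 1"
  shows "(1 - q) * (1 - b) \<le> 1 - r powr q * b"
proof -
  have "r powr q \<le> q * r + (1 - q)" using bern_conc[of q r] q r by simp
  then have "b * r powr q \<le> b * (q * r + (1 - q))" using b by (intro mult_left_mono) auto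
  also have "\<dots> = q * (r * b) + b * (1 - q)" by (simp add: algebra_simps)
  also have "\<dots> \<le> q * 1 + b * (1 - q)" using q r b by (intro add_mono mult_left_mono) auto
  finally show ?thesis by (simp add: algebra_simps)
qed

lemma exists_r:
  fixes q b u :: real
  assumes q: "0 < q" "q < 1" and b: "0 < b" "b < 1" and u: "1 \<le> u"
  shows "\<exists>r. 1 \<le> r \<and> r * b < 1 \<and>
     ((1 - b) / (1 - r * b)) powr q * (1 - r powr q * b) / (1 - b) = u"
proof -
  define g where "g = (\<lambda>r. ((1 - b) / (1 - r * b)) powr q * (1 - r powr q * b) / (1 - b))"
  define W where "W = max 1 ((u / (1 - q)) powr (1 / q))"
  have W1: "1 \<le> W" by (simp add: W_def)
  define r1 where "r1 = (1 - (1 - b) / W) / b"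
  have r1b: "r1 * b = 1 - (1 - b) / W" using b by (simp add: r1_def)
  have r1b1: "r1 * b < 1" using b W1 r1b by simp
  have "(1 - b) / W \<le> 1 - b" using b W1 by (simp add: divide_le_eq mult_le_cancel_left2 le_divide_eq)
  then have "b \<le> r1 * b" using r1b by simp
  then have r1: "1 \<le> r1" using b by simp
  have w1: "(1 - b) / (1 - r1 * b) = W" using b W1 by (simp add: r1b)
  have "u = (1 - q) * ((u / (1 - q)) powr (1 / q)) powr q"
    using q u by (simp add: powr_powr)
  also have "\<dots> \<le> (1 - q) * W powr q"
    using q u by (intro mult_left_mono powr_mono2) (auto simp: W_def)
  also have "\<dots> = W powr q * ((1 - q) * (1 - b)) / (1 - b)" using b by simp
  also have "\<dots> \<le> W powr q * (1 - r1 powr q * b) / (1 - b)"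
    using g_lower[OF q b r1] r1b1 b by (intro divide_right_mono mult_left_mono) auto
  also have "\<dots> = g r1" by (simp add: g_def w1)
  finally have ur1: "u \<le> g r1" .
  have g1: "g 1 = 1" using b by (simp add: g_def)
  have cont: "continuous_on {1..r1} g"
  proof -
    have "\<forall>x\<in>{1..r1}. x * b < 1"
      using r1b1 b by (auto intro: le_less_trans[of _ "r1 * b"] simp: mult_right_mono)
    then show ?thesis
      unfolding g_def using b
      by (intro continuous_intros) (auto simp: field_simps)
  qed
  obtain r where r: "1 \<le> r" "r \<le> r1" "g r = u"
    using IVT'[of g 1 u r1, OF _ ur1 r1 cont] g1 u by auto
  have "r * b < 1" using r(2) b r1b1 by (meson le_less_trans mult_right_mono less_imp_le)
  then show ?thesis using r by (auto simp: g_def)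
qed

lemma diff_id_aux:
  fixes W R q r c :: real
  assumes "c \<noteq> 0"
  shows "W * (1 - R * (1 - c)) / c - W * ((1 - q) + q * (1 - r * (1 - c)) / c)
       = W * (1 - c) / c * (q * (r - 1) - (R - 1))"
  using assms by (simp add: field_simps)

lemma diff_id:
  fixes W R q r b :: real
  assumes "b \<noteq> 1"
  shows "W * (1 - R * b) / (1 - b) - W * ((1 - q) + q * (1 - r * b) / (1 - b))
       = W * b / (1 - b) * (q * (r - 1) - (R - 1))"
  using diff_id_aux[of "1 - b" W R q r] assms by simp

lemma lower_params:
  fixes q u e :: real
  assumes q: "0 < q" "q < 1" and u: "1 \<le> u" and e: "0 < e"
  shows "\<exists>b r. 0 < b \<and> b < 1 \<and> 1 \<le> r \<and> r * b < 1 \<and>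
     ((1 - b) / (1 - r * b)) powr q * (1 - r powr q * b) / (1 - b) = u \<and>
     omega_q q u - e < ((1 - b) / (1 - r * b)) powr q"
proof -
  obtain z where z: "1 \<le> z" "H_q q z = u" using H_surj[OF q u] by blast
  have om: "omega_q q u = z powr q" using omega_eq[OF q z] .
  define w0 where "w0 = (max 1 (z powr q - e/2)) powr (1 / q)"
  have w01: "1 \<le> w0" unfolding w0_def by (intro ge_one_powr_ge_zero) (use q in auto)
  have w0q: "w0 powr q = max 1 (z powr q - e/2)" using q by (simp add: w0_def powr_powr)
  have w0z: "w0 \<le> z"
  proof -
    have "max 1 (z powr q - e/2) \<le> z powr q" using z q e ge_one_powr_ge_zero[of z q] by simp
    then have "w0 powr q \<le> z powr q" using w0q by simp
    then show ?thesis using q w01 z powr_less_mono2[of q z w0] by force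
  qed
  define d where "d = (if w0 < z then u - H_q q w0 else 1)"
  have d: "0 < d" using H_strict[OF q w01] z by (auto simp: d_def)
  define b where "b = max (1/2) (1 - d / (2 * u * q))"
  have b: "0 < b" "b < 1" using d q u by (auto simp: b_def)
  have bhalf: "1/2 \<le> b" by (simp add: b_def)
  have bd: "u * q * (1 - b) < d"
  proof -
    have "1 - b \<le> d / (2 * u * q)" by (simp add: b_def)
    then have "u * q * (1 - b) \<le> u * q * (d / (2 * u * q))"
      using q u by (intro mult_left_mono) auto
    also have "\<dots> = d / 2" using q u by simp
    finally show ?thesis using d by simp
  qed
  obtain r where r: "1 \<le> r" "r * b < 1"
    and gr: "((1 - b) / (1 - r * b)) powr q * (1 - r powr q * b) / (1 - b) = u"
    using exists_r[OF q b u] by blast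
  define w where "w = (1 - b) / (1 - r * b)"
  have wpos: "0 < w" using b r by (simp add: w_def)
  have w1: "1 \<le> w" using b r by (simp add: w_def le_divide_eq mult_le_cancel_right1)
  have uw: "u = w powr q * (1 - r powr q * b) / (1 - b)" using gr by (simp add: w_def)
  have "1 \<le> w powr q" using w1 q by (simp add: ge_one_powr_ge_zero)
  show ?thesis
  proof (cases "w0 < z")
    case False
    then have "w0 = z" using w0z by simp
    then have "z powr q - e/2 \<le> 1" using w0q e by (auto simp: max_def split: if_splits)
    then have "omega_q q u - e < w powr q"
      using om \<open>1 \<le> w powr q\<close> e by simp
    then show ?thesis using b r gr unfolding w_def by blast
  next
    case True
    then have dd: "d = u - H_q q w0" by (simp add: d_def)
    have wq_le: "(1 - q) * w powr q \<le> u"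
    proof -
      have "(1 - q) * w powr q = w powr q * ((1 - q) * (1 - b)) / (1 - b)" using b by simp
      also have "\<dots> \<le> w powr q * (1 - r powr q * b) / (1 - b)"
        using g_lower[OF q b r(1)] r b by (intro divide_right_mono mult_left_mono) auto
      finally show ?thesis using uw by simp
    qed
    have Hw: "H_q q w = w powr q * ((1 - q) + q * (1 - r * b) / (1 - b))"
      using wpos b r by (simp add: H_q_def powr_diff w_def field_simps)
    have diff: "u - H_q q w = w powr q * b / (1 - b) * (q * (r - 1) - (r powr q - 1))"
      using b unfolding uw Hw by (intro diff_id) simp
    have tay: "q * (r - 1) - (r powr q - 1) \<le> q * (1 - q) / 2 * (r - 1)^2"
      using taylor_powr[OF q r(1)] by simp
    have r1le: "r - 1 \<le> (1 - b) / b"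
      using r b by (simp add: field_simps)
    have sq: "(r - 1)^2 \<le> ((1 - b) / b)^2"
      using r r1le by (intro power_mono) auto
    have "u - H_q q w \<le> w powr q * b / (1 - b) * (q * (1 - q) / 2 * (r - 1)^2)"
      unfolding diff using b tay by (intro mult_left_mono) auto
    also have "\<dots> \<le> (u / (1 - q)) * b / (1 - b) * (q * (1 - q) / 2 * ((1 - b) / b)^2)"
    proof (intro mult_mono divide_right_mono)
      show "w powr q \<le> u / (1 - q)" using wq_le q by (simp add: field_simps)
    qed (use b q sq u in \<open>auto intro: mult_left_mono\<close>)
    also have "\<dots> = u * q / 2 * ((1 - b) / b)"
    proof -
      have nz: "1 - b \<noteq> 0" "1 - q \<noteq> 0" "b \<noteq> 0" using b q by auto
      have aux: "(u / p) * b / c * (q * p / 2 * (c / b)^2) = u * q / 2 * (c / b)"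
        if "c \<noteq> 0" "p \<noteq> 0" "b \<noteq> 0" for c p :: real
        using that by (simp add: field_simps power2_eq_square)
      show ?thesis using aux[of "1 - b" "1 - q"] nz by simp
    qed
    also have "\<dots> \<le> u * q / 2 * (2 * (1 - b))"
    proof (intro mult_left_mono)
      have "0 \<le> (1 - b) * (2 * b - 1)" using b bhalf by (intro mult_nonneg_nonneg) auto
      then have "1 - b \<le> 2 * (1 - b) * b" by (simp add: algebra_simps)
      then show "(1 - b) / b \<le> 2 * (1 - b)" using b by (simp add: divide_le_eq)
    qed (use q u in auto)
    also have "\<dots> = u * q * (1 - b)" by simp
    also have "\<dots> < d" using bd by simp
    finally have "H_q q w0 < H_q q w" using dd by simp
    then have "w0 < w" using H_mono_iff[OF q w01 w1] by simp
    then have "w0 powr q < w powr q" using q w01 by (simp add: powr_less_mono2)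
    then have "z powr q - e < w powr q" using w0q e by simp
    then have "omega_q q u - e < w powr q" using om by simp
    then show ?thesis using b r gr unfolding w_def by blast
  qed
qed


locale tree_ps = prob_space M for M :: "'a measure" +
  fixes T :: "'a set set" and C :: "'a set \<Rightarrow> 'a set set"
  assumes tw: "tree_with M T C"
begin

abbreviation L where "L m \<equiv> tree_level (space M) C m"

definition s :: "nat \<Rightarrow> real" where "s m = (SUP I\<in>L m. measure M I)"

lemma T_space: "space M \<in> T" using tw unfolding tree_with_def by blast

lemma T_sets: "I \<in> T \<Longrightarrow> I \<in> sets M" using tw by (simp add: tree_with_def)

lemma T_pos: "I \<in> T \<Longrightarrow> 0 < measure M I" using tw by (simp add: tree_with_def)

lemma T_ne: "I \<in> T \<Longrightarrow> I \<noteq> {}" using T_pos by force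

lemma T_sub: "I \<in> T \<Longrightarrow> I \<subseteq> space M" using T_sets sets.sets_into_space by blast

lemma C_props:
  assumes "I \<in> T"
  shows "C I \<subseteq> T" "countable (C I)" "pairwise disjnt (C I)" "\<And>J. J \<in> C I \<Longrightarrow> J \<subseteq> I"
    "\<Union>(C I) = I"
  using tw assms by (auto simp: tree_with_def)

lemma T_eq: "T = (\<Union>m. L m)" using tw by (simp add: tree_with_def)

lemma L_sub_T: "L m \<subseteq> T" using T_eq by blast

lemma L_Suc: "L (Suc m) = (\<Union>I\<in>L m. C I)" by simp

lemma L_union: "\<Union>(L m) = space M"
proof (induction m)
  case 0 then show ?case by simp
next
  case (Suc m)
  have "\<Union>(L (Suc m)) = (\<Union>I\<in>L m. \<Union>(C I))" by auto
  also have "\<dots> = (\<Union>I\<in>L m. I)" using C_props(5) L_sub_T by (intro SUP_cong) auto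
  finally show ?case using Suc by simp
qed

lemma L_disj: "I \<in> L m \<Longrightarrow> J \<in> L m \<Longrightarrow> I \<noteq> J \<Longrightarrow> I \<inter> J = {}"
proof (induction m arbitrary: I J)
  case 0 then show ?case by simp
next
  case (Suc m)
  from Suc.prems obtain I' J' where I': "I' \<in> L m" "I \<in> C I'" and J': "J' \<in> L m" "J \<in> C J'" by auto
  show ?case
  proof (cases "I' = J'")
    case True
    then show ?thesis using C_props(3)[of I'] I' J' Suc.prems L_sub_T
      by (auto simp: pairwise_def disjnt_def)
  next
    case False
    then have "I' \<inter> J' = {}" using Suc.IH I' J' by blast
    moreover have "I \<subseteq> I'" "J \<subseteq> J'" using C_props(4) I' J' L_sub_T by blast+
    ultimately show ?thesis by blast
  qed
qed

lemma L_countable: "countable (L m)"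
  by (induction m) (use C_props(2) L_sub_T in auto)

lemma T_countable: "countable T"
  using L_countable T_eq by auto

lemma L_anc: "K \<in> L n \<Longrightarrow> m \<le> n \<Longrightarrow> \<exists>J\<in>L m. K \<subseteq> J"
proof (induction n arbitrary: K)
  case 0 then show ?case by auto
next
  case (Suc n)
  show ?case
  proof (cases "m = Suc n")
    case True then show ?thesis using Suc.prems by auto
  next
    case False
    then have "m \<le> n" using Suc.prems by simp
    from Suc.prems obtain K' where K': "K' \<in> L n" "K \<in> C K'" by auto
    then have "K \<subseteq> K'" using C_props(4) L_sub_T by blast
    with Suc.IH[OF K'(1) \<open>m \<le> n\<close>] show ?thesis by blast
  qed
qed

lemma nest: "A \<in> L a \<Longrightarrow> B \<in> L b \<Longrightarrow> a \<le> b \<Longrightarrow> B \<subseteq> A \<or> A \<inter> B = {}"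
proof -
  assume A: "A \<in> L a" and B: "B \<in> L b" and ab: "a \<le> b"
  obtain J where J: "J \<in> L a" "B \<subseteq> J" using L_anc[OF B ab] by blast
  show ?thesis
  proof (cases "J = A")
    case True then show ?thesis using J by simp
  next
    case False then show ?thesis using L_disj[OF A J(1)] J by blast
  qed
qed

lemma L_cover: "x \<in> space M \<Longrightarrow> \<exists>K\<in>L m. x \<in> K"
  using L_union[of m] by blast

lemma bdd_L: "bdd_above ((\<lambda>I. measure M I) ` L m)"
  by (intro bdd_aboveI[of _ 1]) auto

lemma L_ne: "L m \<noteq> {}" using L_union[of m] not_empty by auto

lemma s_upper: "K \<in> L m \<Longrightarrow> measure M K \<le> s m"
  unfolding s_def by (rule cSUP_upper[OF _ bdd_L])

lemma s_nonneg: "0 \<le> s m"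
proof -
  obtain K where "K \<in> L m" using L_ne by blast
  then show ?thesis using s_upper[of K m] by (meson measure_nonneg order_trans)
qed

lemma s_lim: "s \<longlonglongrightarrow> 0"
  using tw unfolding tree_with_def s_def by auto

lemma T_level: "I \<in> T \<Longrightarrow> \<exists>m. I \<in> L m" using T_eq by auto

end


context tree_ps
begin

definition avg :: "('a \<Rightarrow> real) \<Rightarrow> 'a set \<Rightarrow> ennreal" where
  "avg \<phi> I = ennreal (1 / measure M I) * (\<integral>\<^sup>+ y\<in>I. ennreal \<bar>\<phi> y\<bar> \<partial>M)"

lemma dm_def: "dyadic_max M T \<phi> x = (SUP I\<in>{I\<in>T. x \<in> I}. avg \<phi> I)"
  by (simp add: dyadic_max_def avg_def)

lemma dm_eq_SUP:
  assumes "x \<in> space M"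
  shows "dyadic_max M T \<phi> x = (SUP I\<in>T. avg \<phi> I * indicator I x)"
proof (rule antisym)
  show "dyadic_max M T \<phi> x \<le> (SUP I\<in>T. avg \<phi> I * indicator I x)"
    unfolding dm_def by (rule SUP_mono) (auto simp: indicator_def)
  show "(SUP I\<in>T. avg \<phi> I * indicator I x) \<le> dyadic_max M T \<phi> x"
    unfolding dm_def
  proof (rule SUP_least)
    fix I assume I: "I \<in> T"
    show "avg \<phi> I * indicator I x \<le> (SUP I\<in>{I\<in>T. x \<in> I}. avg \<phi> I)"
    proof (cases "x \<in> I")
      case True then show ?thesis using I by (auto intro: SUP_upper2)
    next
      case False then show ?thesis by simp
    qed
  qed
qed

lemma dm_measurable:
  assumes "\<phi> \<in> borel_measurable M"
  shows "dyadic_max M T \<phi> \<in> borel_measurable M"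
proof -
  have "(\<lambda>x. SUP I\<in>T. avg \<phi> I * indicator I x) \<in> borel_measurable M"
    using T_countable T_sets by (intro borel_measurable_SUP) auto
  then show ?thesis
    by (subst measurable_cong[OF dm_eq_SUP]) auto
qed

lemma dm_ge_avg: "I \<in> T \<Longrightarrow> x \<in> I \<Longrightarrow> avg \<phi> I \<le> dyadic_max M T \<phi> x"
  unfolding dm_def by (auto intro: SUP_upper2)

lemma avg_mult:
  assumes "I \<in> T"
  shows "ennreal (measure M I) * avg \<phi> I = (\<integral>\<^sup>+ y\<in>I. ennreal \<bar>\<phi> y\<bar> \<partial>M)"
proof -
  have "ennreal (measure M I) * ennreal (1 / measure M I) = 1"
    using T_pos[OF assms] by (simp flip: ennreal_mult)
  then show ?thesis unfolding avg_def by (simp flip: mult.assoc)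
qed

lemma weak_type:
  assumes phi: "\<phi> \<in> borel_measurable M" and lam: "0 \<le> c"
  shows "ennreal c * emeasure M {x\<in>space M. ennreal c < dyadic_max M T \<phi> x}
     \<le> (\<integral>\<^sup>+ x. ennreal \<bar>\<phi> x\<bar> * indicator {x\<in>space M. ennreal c < dyadic_max M T \<phi> x} x \<partial>M)"
proof -
  define S where "S = {I\<in>T. ennreal c < avg \<phi> I}"
  define G where "G = {I. \<exists>m. I \<in> L m \<and> I \<in> S \<and> (\<forall>j<m. \<forall>J\<in>L j. I \<subseteq> J \<longrightarrow> J \<notin> S)}"
  define E where "E = {x\<in>space M. ennreal c < dyadic_max M T \<phi> x}"
  have GT: "G \<subseteq> T" unfolding G_def S_def by auto
  have E_eq: "E = \<Union>G"
  proof
    show "E \<subseteq> \<Union>G"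
    proof
      fix x assume "x \<in> E"
      then have x: "x \<in> space M" "ennreal c < dyadic_max M T \<phi> x" by (auto simp: E_def)
      then obtain I where I: "I \<in> T" "x \<in> I" "ennreal c < avg \<phi> I"
        unfolding dm_def by (auto simp: less_SUP_iff)
      obtain n where n: "I \<in> L n" using T_level[OF I(1)] by blast
      define P where "P = (\<lambda>m. \<exists>K\<in>L m. x \<in> K \<and> K \<in> S)"
      have Pn: "P n" using I n by (auto simp: P_def S_def)
      define m where "m = (LEAST m. P m)"
      have Pm: "P m" unfolding m_def by (rule LeastI[of P n, OF Pn])
      then obtain K where K: "K \<in> L m" "x \<in> K" "K \<in> S" by (auto simp: P_def)
      have "\<forall>j<m. \<forall>J\<in>L j. K \<subseteq> J \<longrightarrow> J \<notin> S"
      proof (intro allI impI ballI)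
        fix j J assume j: "j < m" and J: "J \<in> L j" and KJ: "K \<subseteq> J"
        show "J \<notin> S"
        proof
          assume "J \<in> S"
          then have "P j" using J KJ K(2) by (auto simp: P_def)
          then show False using not_less_Least[OF j[unfolded m_def]] by blast
        qed
      qed
      then have "K \<in> G" using K by (auto simp: G_def)
      then show "x \<in> \<Union>G" using K by blast
    qed
  next
    show "\<Union>G \<subseteq> E"
    proof
      fix x assume "x \<in> \<Union>G"
      then obtain K where K: "K \<in> G" "x \<in> K" by blast
      then have KS: "K \<in> T" "ennreal c < avg \<phi> K" by (auto simp: G_def S_def)
      have "x \<in> space M" using T_sub[OF KS(1)] K by blast
      moreover have "ennreal c < dyadic_max M T \<phi> x"
        using KS dm_ge_avg[OF KS(1) K(2)] by (rule_tac less_le_trans) auto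
      ultimately show "x \<in> E" by (simp add: E_def)
    qed
  qed
  have disj: "disjoint_family_on (\<lambda>K. K) G"
  proof (unfold disjoint_family_on_def, intro ballI impI)
    fix K1 K2 assume K1: "K1 \<in> G" and K2: "K2 \<in> G" and ne: "K1 \<noteq> K2"
    obtain m1 where m1: "K1 \<in> L m1" "K1 \<in> S" "\<forall>j<m1. \<forall>J\<in>L j. K1 \<subseteq> J \<longrightarrow> J \<notin> S"
      using K1 by (auto simp: G_def)
    obtain m2 where m2: "K2 \<in> L m2" "K2 \<in> S" "\<forall>j<m2. \<forall>J\<in>L j. K2 \<subseteq> J \<longrightarrow> J \<notin> S"
      using K2 by (auto simp: G_def)
    consider "m1 = m2" | "m1 < m2" | "m2 < m1" by linarith
    then show "K1 \<inter> K2 = {}"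
    proof cases
      case 1 then show ?thesis using L_disj m1 m2 ne by blast
    next
      case 2
      then have "K2 \<subseteq> K1 \<or> K1 \<inter> K2 = {}" using nest[OF m1(1) m2(1)] by simp
      then show ?thesis using m2(3) 2 m1 by blast
    next
      case 3
      then have "K1 \<subseteq> K2 \<or> K2 \<inter> K1 = {}" using nest[OF m2(1) m1(1)] by simp
      then show ?thesis using m1(3) 3 m2 by blast
    qed
  qed
  have cG: "countable G" using countable_subset[OF GT T_countable] .
  have Gsets: "K \<in> sets M" if "K \<in> G" for K using GT T_sets that by blast
  define N where "N = density M (\<lambda>x. ennreal \<bar>\<phi> x\<bar>)"
  have sN: "sets N = sets M" by (simp add: N_def)
  have NK: "emeasure N K = (\<integral>\<^sup>+ y\<in>K. ennreal \<bar>\<phi> y\<bar> \<partial>M)" if "K \<in> sets M" for K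
    unfolding N_def using phi that by (subst emeasure_density) auto
  have each: "ennreal c * emeasure M K \<le> emeasure N K" if K: "K \<in> G" for K
  proof -
    have KT: "K \<in> T" and KS: "ennreal c < avg \<phi> K" using K by (auto simp: G_def S_def)
    have "ennreal c * emeasure M K = ennreal (measure M K) * ennreal c"
      by (simp add: emeasure_eq_measure mult.commute)
    also have "\<dots> \<le> ennreal (measure M K) * avg \<phi> K"
      using KS by (intro mult_left_mono) auto
    also have "\<dots> = emeasure N K" using avg_mult[OF KT] NK[OF T_sets[OF KT]] by simp
    finally show ?thesis .
  qed
  have "ennreal c * emeasure M E = ennreal c * (\<integral>\<^sup>+K. emeasure M K \<partial>count_space G)"
    unfolding E_eq using emeasure_UN_countable[of G "\<lambda>K. K" M] cG disj Gsets by simp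
  also have "\<dots> = (\<integral>\<^sup>+K. ennreal c * emeasure M K \<partial>count_space G)"
    by (simp add: nn_integral_cmult)
  also have "\<dots> \<le> (\<integral>\<^sup>+K. emeasure N K \<partial>count_space G)"
    by (intro nn_integral_mono) (use each in auto)
  also have "\<dots> = emeasure N (\<Union>G)"
    using emeasure_UN_countable[of G "\<lambda>K. K" N] cG disj Gsets sN by simp
  also have "\<dots> = (\<integral>\<^sup>+ x. ennreal \<bar>\<phi> x\<bar> * indicator E x \<partial>M)"
  proof -
    have "\<Union>G \<in> sets M" using cG Gsets by (intro sets.countable_Union) auto
    then show ?thesis using NK[of "\<Union>G"] E_eq by simp
  qed
  finally show ?thesis by (simp add: E_def)
qed

end


lemma nn_FTC:
  fixes F g :: "real \<Rightarrow> real" and a b :: real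
  assumes ab: "a \<le> b"
    and deriv: "\<And>x. a \<le> x \<Longrightarrow> x \<le> b \<Longrightarrow> DERIV F x :> g x"
    and cont: "\<And>x. a \<le> x \<Longrightarrow> x \<le> b \<Longrightarrow> isCont g x"
    and nonneg: "\<And>x. a \<le> x \<Longrightarrow> x \<le> b \<Longrightarrow> 0 \<le> g x"
  shows "(\<integral>\<^sup>+l. ennreal (if a < l \<and> l < b then g l else 0) \<partial>lborel) = ennreal (F b - F a)"
proof -
  have hb: "has_bochner_integral lborel (\<lambda>x. g x * indicator {a .. b} x) (F b - F a)"
    using has_bochner_integral_FTC_Icc_real[OF ab deriv cont] by auto
  then have int: "integrable lborel (\<lambda>x. g x * indicator {a .. b} x)"
    and ieq: "(\<integral>x. g x * indicator {a .. b} x \<partial>lborel) = F b - F a"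
    by (auto simp: has_bochner_integral_iff)
  have "(\<integral>\<^sup>+l. ennreal (g l * indicator {a .. b} l) \<partial>lborel) = ennreal (F b - F a)"
    using nn_integral_eq_integral[OF int] nonneg ieq
    by (simp add: indicator_def)
  moreover have "(\<integral>\<^sup>+l. ennreal (if a < l \<and> l < b then g l else 0) \<partial>lborel)
      = (\<integral>\<^sup>+l. ennreal (g l * indicator {a .. b} l) \<partial>lborel)"
  proof (rule nn_integral_cong_AE)
    show "AE l in lborel. ennreal (if a < l \<and> l < b then g l else 0) = ennreal (g l * indicator {a .. b} l)"
      using AE_lborel_singleton[of a] AE_lborel_singleton[of b]
      by eventually_elim (auto simp: indicator_def)
  qed
  ultimately show ?thesis by simp
qed

lemma ftc_q1:
  fixes q f Y :: real
  assumes q: "0 < q" "q < 1" and f: "0 < f" "f \<le> Y"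
  shows "(\<integral>\<^sup>+l. ennreal (if f < l \<and> l < Y then l powr (q - 1) else 0) \<partial>lborel)
     = ennreal ((Y powr q - f powr q) / q)"
proof -
  have "(\<integral>\<^sup>+l. ennreal (if f < l \<and> l < Y then l powr (q - 1) else 0) \<partial>lborel)
     = ennreal (Y powr q / q - f powr q / q)"
  proof (rule nn_FTC[OF f(2)])
    fix x assume x: "f \<le> x" "x \<le> Y"
    then have x0: "0 < x" using f by simp
    show "DERIV (\<lambda>x. x powr q / q) x :> x powr (q - 1)"
      using x0 q by (auto intro!: derivative_eq_intros)
    show "isCont (\<lambda>l. l powr (q - 1)) x" using x0 by (auto intro!: continuous_intros)
    show "0 \<le> x powr (q - 1)" by simp
  qed
  then show ?thesis by (simp add: diff_divide_distrib)
qed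

lemma ftc_q2:
  fixes q f Y :: real
  assumes q: "0 < q" "q < 1" and f: "0 < f" "f \<le> Y"
  shows "(\<integral>\<^sup>+l. ennreal (if f < l \<and> l < Y then l powr (q - 2) else 0) \<partial>lborel)
     = ennreal ((f powr (q - 1) - Y powr (q - 1)) / (1 - q))"
proof -
  have "(\<integral>\<^sup>+l. ennreal (if f < l \<and> l < Y then l powr (q - 2) else 0) \<partial>lborel)
     = ennreal (Y powr (q - 1) / (q - 1) - f powr (q - 1) / (q - 1))"
  proof (rule nn_FTC[OF f(2)])
    fix x assume x: "f \<le> x" "x \<le> Y"
    then have x0: "0 < x" using f by simp
    have q1: "q - 1 \<noteq> 0" using q by simp
    have "DERIV (\<lambda>x. x powr (q - 1) / (q - 1)) x :> (q - 1) * x powr (q - 1 - 1) / (q - 1)"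
      using x0 q by (auto intro!: derivative_eq_intros)
    then show "DERIV (\<lambda>x. x powr (q - 1) / (q - 1)) x :> x powr (q - 2)"
      using q1 by (simp add: diff_diff_eq)
    show "isCont (\<lambda>l. l powr (q - 2)) x" using x0 by (auto intro!: continuous_intros)
    show "0 \<le> x powr (q - 2)" by simp
  qed
  moreover have "Y powr (q - 1) / (q - 1) - f powr (q - 1) / (q - 1)
      = (f powr (q - 1) - Y powr (q - 1)) / (1 - q)"
  proof -
    have aux: "A / c - B / c = (B - A) / (- c)" if "c \<noteq> 0" for A B c :: real
      using that by (simp add: field_simps)
    have "1 - q = - (q - 1)" by simp
    then show ?thesis using aux[of "q - 1" "Y powr (q - 1)" "f powr (q - 1)"] q by simp
  qed
  ultimately show ?thesis by simp
qed


context tree_ps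
begin

lemma nnint_abs:
  assumes int: "integrable M \<phi>" and nn: "\<forall>x\<in>space M. 0 \<le> \<phi> x"
  shows "(\<integral>\<^sup>+x. ennreal \<bar>\<phi> x\<bar> \<partial>M) = ennreal (\<integral>x. \<phi> x \<partial>M)"
proof -
  have "(\<integral>\<^sup>+x. ennreal \<bar>\<phi> x\<bar> \<partial>M) = (\<integral>\<^sup>+x. ennreal (\<phi> x) \<partial>M)"
    using nn by (intro nn_integral_cong) auto
  also have "\<dots> = ennreal (\<integral>x. \<phi> x \<partial>M)"
    using nn by (intro nn_integral_eq_integral int) auto
  finally show ?thesis .
qed

lemma psi_ge:
  assumes int: "integrable M \<phi>" and nn: "\<forall>x\<in>space M. 0 \<le> \<phi> x" and x: "x \<in> space M"
  shows "ennreal (\<integral>x. \<phi> x \<partial>M) \<le> dyadic_max M T \<phi> x"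
proof -
  have "avg \<phi> (space M) = ennreal (\<integral>x. \<phi> x \<partial>M)"
  proof -
    have "(\<integral>\<^sup>+y\<in>space M. ennreal \<bar>\<phi> y\<bar> \<partial>M) = (\<integral>\<^sup>+x. ennreal \<bar>\<phi> x\<bar> \<partial>M)"
      by (intro nn_integral_cong) auto
    then show ?thesis unfolding avg_def using nnint_abs[OF int nn] by (simp add: prob_space)
  qed
  then show ?thesis using dm_ge_avg[OF T_space x, of \<phi>] by simp
qed

lemma psi_fin:
  assumes int: "integrable M \<phi>" and nn: "\<forall>x\<in>space M. 0 \<le> \<phi> x"
  shows "AE x in M. dyadic_max M T \<phi> x \<noteq> \<top>"
proof -
  have phim[measurable]: "\<phi> \<in> borel_measurable M" using int by auto
  have psim[measurable]: "dyadic_max M T \<phi> \<in> borel_measurable M" by (rule dm_measurable[OF phim])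
  define N0 where "N0 = {x\<in>space M. dyadic_max M T \<phi> x = \<top>}"
  have N0s: "N0 \<in> sets M" unfolding N0_def by measurable
  define m where "m = measure M N0"
  have bound: "c * m \<le> (\<integral>x. \<phi> x \<partial>M)" if c: "0 < c" for c
  proof -
    define E where "E = {x\<in>space M. ennreal c < dyadic_max M T \<phi> x}"
    have Es: "E \<in> sets M" unfolding E_def by measurable
    have "N0 \<subseteq> E" by (auto simp: N0_def E_def)
    then have "emeasure M N0 \<le> emeasure M E" by (intro emeasure_mono Es)
    then have "ennreal c * emeasure M N0 \<le> ennreal c * emeasure M E" by (rule mult_left_mono) auto
    also have "\<dots> \<le> (\<integral>\<^sup>+ x. ennreal \<bar>\<phi> x\<bar> * indicator E x \<partial>M)"
      unfolding E_def using weak_type[OF phim, of c] c by simp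
    also have "\<dots> \<le> (\<integral>\<^sup>+ x. ennreal \<bar>\<phi> x\<bar> \<partial>M)"
      by (intro nn_integral_mono) (auto simp: indicator_def)
    also have "\<dots> = ennreal (\<integral>x. \<phi> x \<partial>M)" by (rule nnint_abs[OF int nn])
    finally have "ennreal (c * m) \<le> ennreal (\<integral>x. \<phi> x \<partial>M)"
      using c by (simp add: m_def emeasure_eq_measure ennreal_mult)
    moreover have "0 \<le> (\<integral>x. \<phi> x \<partial>M)" using nn by (intro integral_nonneg_AE AE_I2) auto
    ultimately show ?thesis by (simp add: ennreal_le_iff)
  qed
  have "m = 0"
  proof (rule ccontr)
    assume "m \<noteq> 0"
    then have mpos: "0 < m" by (simp add: m_def order_le_neq_trans)
    define c where "c = ((\<integral>x. \<phi> x \<partial>M) + 1) / m"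
    have "0 \<le> (\<integral>x. \<phi> x \<partial>M)" using nn by (intro integral_nonneg_AE AE_I2) auto
    then have "0 < c" using mpos by (simp add: c_def)
    from bound[OF this] mpos show False by (simp add: c_def)
  qed
  then have "emeasure M N0 = 0" by (simp add: m_def emeasure_eq_measure)
  then show ?thesis
    using AE_iff_measurable[OF N0s, of "\<lambda>x. dyadic_max M T \<phi> x \<noteq> \<top>"] by (simp add: N0_def)
qed

end


context tree_ps
begin

lemma tonelli_ineq:
  fixes q f :: real and \<phi> y :: "'a \<Rightarrow> real"
  assumes q: "0 < q" "q < 1" and f: "0 < f"
    and phim[measurable]: "\<phi> \<in> borel_measurable M" and nn: "\<forall>x\<in>space M. 0 \<le> \<phi> x"
    and ym[measurable]: "y \<in> borel_measurable M" and yge: "\<And>x. x \<in> space M \<Longrightarrow> f \<le> y x"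
    and yAE: "AE x in M. dyadic_max M T \<phi> x = ennreal (y x)"
  shows "(\<integral>\<^sup>+x. ennreal ((y x powr q - f powr q) / q) \<partial>M)
      \<le> (\<integral>\<^sup>+x. ennreal (\<phi> x * ((f powr (q - 1) - y x powr (q - 1)) / (1 - q))) \<partial>M)"
proof -
  interpret P: pair_sigma_finite M "lborel :: real measure"
    by unfold_locales
  have psim[measurable]: "dyadic_max M T \<phi> \<in> borel_measurable M" by (rule dm_measurable[OF phim])
  define k1 where "k1 = (\<lambda>x l::real. ennreal (if f < l \<and> l < y x then l powr (q - 1) else 0))"
  define k2 where "k2 = (\<lambda>x l::real. ennreal (if f < l \<and> l < y x then \<phi> x * l powr (q - 2) else 0))"
  have k1m: "case_prod k1 \<in> borel_measurable (M \<Otimes>\<^sub>M lborel)"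
    unfolding k1_def by measurable
  have k2m: "case_prod k2 \<in> borel_measurable (M \<Otimes>\<^sub>M lborel)"
    unfolding k2_def by measurable
  have "(\<integral>\<^sup>+x. ennreal ((y x powr q - f powr q) / q) \<partial>M) = (\<integral>\<^sup>+x. \<integral>\<^sup>+l. k1 x l \<partial>lborel \<partial>M)"
    by (intro nn_integral_cong) (simp add: k1_def ftc_q1[OF q f yge])
  also have "\<dots> = (\<integral>\<^sup>+l. \<integral>\<^sup>+x. k1 x l \<partial>M \<partial>lborel)"
    using P.Fubini'[OF k1m] by simp
  also have "\<dots> \<le> (\<integral>\<^sup>+l. \<integral>\<^sup>+x. k2 x l \<partial>M \<partial>lborel)"
  proof (rule nn_integral_mono)
    fix l :: real assume "l \<in> space lborel"
    show "(\<integral>\<^sup>+x. k1 x l \<partial>M) \<le> (\<integral>\<^sup>+x. k2 x l \<partial>M)"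
    proof (cases "f < l")
      case False then show ?thesis by (simp add: k1_def k2_def)
    next
      case True
      then have l0: "0 < l" using f by simp
      define E where "E = {x\<in>space M. ennreal l < dyadic_max M T \<phi> x}"
      define E' where "E' = {x\<in>space M. l < y x}"
      have Es: "E \<in> sets M" unfolding E_def by measurable
      have E's: "E' \<in> sets M" unfolding E'_def by measurable
      have "(\<integral>\<^sup>+x. k1 x l \<partial>M) = (\<integral>\<^sup>+x. ennreal (l powr (q - 1)) * indicator E' x \<partial>M)"
        using True by (intro nn_integral_cong) (auto simp: k1_def E'_def indicator_def)
      also have "\<dots> = ennreal (l powr (q - 1)) * emeasure M E'"
        by (rule nn_integral_cmult_indicator[OF E's])
      also have "emeasure M E' = emeasure M E"
      proof (rule emeasure_eq_AE[OF _ E's Es])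
        show "AE x in M. (x \<in> E') = (x \<in> E)"
          using yAE by eventually_elim (use l0 in \<open>auto simp: E_def E'_def ennreal_less_iff\<close>)
      qed
      also have "ennreal (l powr (q - 1)) * emeasure M E = ennreal (l powr (q - 2)) * (ennreal l * emeasure M E)"
      proof -
        have "l powr (q - 2) * l = l powr (q - 2) * l powr 1" using l0 by simp
        also have "\<dots> = l powr (q - 2 + 1)" by (rule powr_add[symmetric])
        finally have "l powr (q - 1) = l powr (q - 2) * l" using l0 by simp
        then show ?thesis using l0 by (simp add: ennreal_mult mult.assoc)
      qed
      also have "\<dots> \<le> ennreal (l powr (q - 2)) * (\<integral>\<^sup>+ x. ennreal \<bar>\<phi> x\<bar> * indicator E x \<partial>M)"
        using weak_type[OF phim, of l] l0 by (intro mult_left_mono) (auto simp: E_def)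
      also have "\<dots> = (\<integral>\<^sup>+ x. ennreal (l powr (q - 2)) * (ennreal \<bar>\<phi> x\<bar> * indicator E x) \<partial>M)"
        by (rule nn_integral_cmult[symmetric]) (use phim Es in measurable)
      also have "\<dots> = (\<integral>\<^sup>+x. k2 x l \<partial>M)"
      proof (rule nn_integral_cong_AE)
        show "AE x in M. ennreal (l powr (q - 2)) * (ennreal \<bar>\<phi> x\<bar> * indicator E x) = k2 x l"
          using yAE AE_space
        proof eventually_elim
          case (elim x)
          then have xs: "x \<in> space M" by simp
          then have "\<bar>\<phi> x\<bar> = \<phi> x" using nn by simp
          then show ?case using elim True l0 xs
            by (auto simp: k2_def E_def indicator_def ennreal_less_iff ennreal_mult[symmetric] mult.commute)
        qed
      qed
      finally show ?thesis .
    qed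
  qed
  also have "\<dots> = (\<integral>\<^sup>+x. \<integral>\<^sup>+l. k2 x l \<partial>lborel \<partial>M)"
    using P.Fubini'[OF k2m] by simp
  also have "\<dots> = (\<integral>\<^sup>+x. ennreal (\<phi> x * ((f powr (q - 1) - y x powr (q - 1)) / (1 - q))) \<partial>M)"
  proof (intro nn_integral_cong)
    fix x assume x: "x \<in> space M"
    have "(\<integral>\<^sup>+l. k2 x l \<partial>lborel) = (\<integral>\<^sup>+l. ennreal (\<phi> x) * ennreal (if f < l \<and> l < y x then l powr (q - 2) else 0) \<partial>lborel)"
      using nn x by (intro nn_integral_cong) (auto simp: k2_def ennreal_mult)
    also have "\<dots> = ennreal (\<phi> x) * ennreal ((f powr (q - 1) - y x powr (q - 1)) / (1 - q))"
      by (simp add: nn_integral_cmult ftc_q2[OF q f yge[OF x]])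
    also have "\<dots> = ennreal (\<phi> x * ((f powr (q - 1) - y x powr (q - 1)) / (1 - q)))"
      using nn x by (subst ennreal_mult'[symmetric]) auto
    finally show "(\<integral>\<^sup>+l. k2 x l \<partial>lborel) = ennreal (\<phi> x * ((f powr (q - 1) - y x powr (q - 1)) / (1 - q)))" .
  qed
  finally show ?thesis .
qed

end


context tree_ps
begin

lemma upper_one:
  fixes q f h :: real and \<phi> :: "'a \<Rightarrow> real"
  assumes q: "0 < q" "q < 1" and f: "0 < f" and h: "0 < h" and hf: "h \<le> f powr q"
    and int: "integrable M \<phi>" and nn: "\<forall>x\<in>space M. 0 \<le> \<phi> x"
    and If: "(\<integral>x. \<phi> x \<partial>M) = f" and Ih: "(\<integral>x. \<phi> x powr q \<partial>M) = h"
  shows "(\<integral>\<^sup>+x. ennpow (dyadic_max M T \<phi> x) q \<partial>M) \<le> ennreal (h * omega_q q (f powr q / h))"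
proof -
  have phim[measurable]: "\<phi> \<in> borel_measurable M" using int by auto
  have psim[measurable]: "dyadic_max M T \<phi> \<in> borel_measurable M" by (rule dm_measurable[OF phim])
  define y where "y = (\<lambda>x. if dyadic_max M T \<phi> x = \<top> then f else enn2real (dyadic_max M T \<phi> x))"
  have ym[measurable]: "y \<in> borel_measurable M" unfolding y_def by measurable
  have yge: "f \<le> y x" if x: "x \<in> space M" for x
  proof (cases "dyadic_max M T \<phi> x = \<top>")
    case True then show ?thesis by (simp add: y_def)
  next
    case False
    have "ennreal f \<le> dyadic_max M T \<phi> x" using psi_ge[OF int nn x] If by simp
    also have "\<dots> = ennreal (enn2real (dyadic_max M T \<phi> x))" using False by (simp add: ennreal_enn2real_if)
    finally show ?thesis using False by (simp add: y_def ennreal_le_iff)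
  qed
  have ypos: "0 < y x" if "x \<in> space M" for x using yge[OF that] f by simp
  have yAE: "AE x in M. dyadic_max M T \<phi> x = ennreal (y x)"
    using psi_fin[OF int nn] by eventually_elim (simp add: y_def ennreal_enn2real_if)
  note ton = tonelli_ineq[OF q f phim nn ym yge yAE]
  define A where "A = (\<lambda>x. (y x powr q - f powr q) / q)"
  define B where "B = (\<lambda>x. \<phi> x * ((f powr (q - 1) - y x powr (q - 1)) / (1 - q)))"
  have Am[measurable]: "A \<in> borel_measurable M" unfolding A_def by measurable
  have Anonneg: "0 \<le> A x" if "x \<in> space M" for x
    using yge[OF that] f q by (simp add: A_def powr_mono2)
  have ypm: "y x powr (q - 1) \<le> f powr (q - 1)" if "x \<in> space M" for x
    using yge[OF that] f q by (intro powr_mono2') auto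
  have Bnonneg: "0 \<le> B x" if "x \<in> space M" for x
    using ypm[OF that] nn that q by (simp add: B_def)
  have i1: "integrable M (\<lambda>x. f powr (q - 1) * \<phi> x)" using int by simp
  have m1: "(\<lambda>x. \<phi> x * y x powr (q - 1)) \<in> borel_measurable M" by measurable
  have ae1: "AE x in M. norm (\<phi> x * y x powr (q - 1)) \<le> norm (f powr (q - 1) * \<phi> x)"
    using AE_space
  proof eventually_elim
    case (elim x)
    then show ?case using nn ypm[OF elim] by (simp add: abs_mult mult.commute mult_left_mono)
  qed
  have int_py: "integrable M (\<lambda>x. \<phi> x * y x powr (q - 1))"
    using Bochner_Integration.integrable_bound[OF i1 m1 ae1] .
  have intB: "integrable M B"
    unfolding B_def using int int_py
    by (simp add: right_diff_distrib diff_divide_distrib)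
  have intBeq: "(\<integral>x. B x \<partial>M) = (f powr (q - 1) * f - (\<integral>x. \<phi> x * y x powr (q - 1) \<partial>M)) / (1 - q)"
  proof -
    have "(\<lambda>x. B x) = (\<lambda>x. (f powr (q - 1) * \<phi> x - \<phi> x * y x powr (q - 1)) / (1 - q))"
      by (simp add: B_def algebra_simps)
    then have "(\<integral>x. B x \<partial>M) = (\<integral>x. (f powr (q - 1) * \<phi> x - \<phi> x * y x powr (q - 1)) \<partial>M) / (1 - q)"
      by simp
    also have "\<dots> = (f powr (q - 1) * f - (\<integral>x. \<phi> x * y x powr (q - 1) \<partial>M)) / (1 - q)"
      using int int_py If by simp
    finally show ?thesis .
  qed
  have nnB: "(\<integral>\<^sup>+x. ennreal (B x) \<partial>M) = ennreal (\<integral>x. B x \<partial>M)"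
    using Bnonneg by (intro nn_integral_eq_integral intB) (auto intro: AE_I2)
  have nnA_le: "(\<integral>\<^sup>+x. ennreal (A x) \<partial>M) \<le> ennreal (\<integral>x. B x \<partial>M)"
    using ton nnB by (simp add: A_def B_def)
  have intA: "integrable M A"
  proof (rule integrableI_bounded[OF Am])
    have "(\<integral>\<^sup>+x. ennreal (norm (A x)) \<partial>M) = (\<integral>\<^sup>+x. ennreal (A x) \<partial>M)"
      using Anonneg by (intro nn_integral_cong) auto
    then show "(\<integral>\<^sup>+x. ennreal (norm (A x)) \<partial>M) < \<infinity>" using nnA_le by (simp add: le_less_trans)
  qed
  have "ennreal (\<integral>x. A x \<partial>M) \<le> ennreal (\<integral>x. B x \<partial>M)"
    using nnA_le nn_integral_eq_integral[OF intA] Anonneg by (simp add: AE_I2)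
  then have AB: "(\<integral>x. A x \<partial>M) \<le> (\<integral>x. B x \<partial>M)"
    using Bnonneg by (subst (asm) ennreal_le_iff) (auto intro: integral_nonneg_AE AE_I2)
  have yq_eq: "(\<lambda>x. y x powr q) = (\<lambda>x. q * A x + f powr q)" using q by (auto simp: A_def)
  have int_yq: "integrable M (\<lambda>x. y x powr q)" unfolding yq_eq using intA by simp
  define L where "L = (\<integral>x. y x powr q \<partial>M)"
  define P where "P = (\<integral>x. \<phi> x * y x powr (q - 1) \<partial>M)"
  have LA: "L = q * (\<integral>x. A x \<partial>M) + f powr q" unfolding L_def yq_eq using intA by (simp add: prob_space)
  have ff: "f powr (q - 1) * f = f powr q" using f by (simp add: powr_diff)
  have U: "(1 - q) * L + q * P \<le> f powr q"
  proof -
    have "(\<integral>x. A x \<partial>M) \<le> (f powr q - P) / (1 - q)"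
      using AB intBeq ff q by (simp add: P_def)
    then have "q * (\<integral>x. A x \<partial>M) \<le> q * ((f powr q - P) / (1 - q))"
      using q by (intro mult_left_mono) auto
    then have "L - f powr q \<le> q * (f powr q - P) / (1 - q)" using LA by simp
    then have "(1 - q) * (L - f powr q) \<le> q * (f powr q - P)" using q by (simp add: field_simps)
    then show ?thesis by (simp add: algebra_simps)
  qed
  have int_phq: "integrable M (\<lambda>x. \<phi> x powr q)"
    using Ih h not_integrable_integral_eq by force
  have Y: "h \<le> q * x0 powr (q - 1) * P + (1 - q) * x0 powr q * L" if x0: "0 < x0" for x0
  proof -
    have "(\<integral>x. \<phi> x powr q \<partial>M) \<le> (\<integral>x. q * x0 powr (q - 1) * (\<phi> x * y x powr (q - 1)) + (1 - q) * x0 powr q * y x powr q \<partial>M)"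
    proof (rule integral_mono)
      show "integrable M (\<lambda>x. \<phi> x powr q)" by (rule int_phq)
      show "integrable M (\<lambda>x. q * x0 powr (q - 1) * (\<phi> x * y x powr (q - 1)) + (1 - q) * x0 powr q * y x powr q)"
        using int_py int_yq by simp
      fix x assume x: "x \<in> space M"
      have yx: "0 < y x" using ypos[OF x] .
      have px: "0 \<le> \<phi> x" using nn x by simp
      have I0: "(\<phi> x / y x) powr q \<le> q * x0 powr (q - 1) * (\<phi> x / y x) + (1 - q) * x0 powr q"
        using tangent_powr[OF q _ x0, of "\<phi> x / y x"] px yx by simp
      have e2: "y x powr q * (\<phi> x / y x) powr q = \<phi> x powr q"
        using yx px by (simp add: powr_divide)
      have e3: "y x powr q * (\<phi> x / y x) = \<phi> x * y x powr (q - 1)"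
        using yx by (simp add: powr_diff)
      have "\<phi> x powr q = y x powr q * (\<phi> x / y x) powr q" using e2 by simp
      also have "\<dots> \<le> y x powr q * (q * x0 powr (q - 1) * (\<phi> x / y x) + (1 - q) * x0 powr q)"
        using I0 by (intro mult_left_mono) auto
      also have "\<dots> = q * x0 powr (q - 1) * (y x powr q * (\<phi> x / y x)) + (1 - q) * x0 powr q * y x powr q"
        by (simp only: distrib_left mult.assoc mult.left_commute mult.commute)
      also have "\<dots> = q * x0 powr (q - 1) * (\<phi> x * y x powr (q - 1)) + (1 - q) * x0 powr q * y x powr q"
        by (simp only: e3)
      finally show "\<phi> x powr q \<le> q * x0 powr (q - 1) * (\<phi> x * y x powr (q - 1)) + (1 - q) * x0 powr q * y x powr q" .
    qed
    also have "\<dots> = q * x0 powr (q - 1) * P + (1 - q) * x0 powr q * L"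
      using int_py int_yq by (simp add: P_def L_def)
    finally show ?thesis using Ih by simp
  qed
  have L0: "0 \<le> L" unfolding L_def by (intro integral_nonneg_AE AE_I2) simp
  have Lle: "L \<le> h * omega_q q (f powr q / h)"
    by (rule upper_algebra[OF q f h hf L0 U Y])
  have "(\<integral>\<^sup>+x. ennpow (dyadic_max M T \<phi> x) q \<partial>M) = (\<integral>\<^sup>+x. ennreal (y x powr q) \<partial>M)"
  proof (rule nn_integral_cong_AE)
    show "AE x in M. ennpow (dyadic_max M T \<phi> x) q = ennreal (y x powr q)"
      using yAE AE_space
    proof eventually_elim
      case (elim x)
      then show ?case using ypos[of x] by (simp add: ennpow_def)
    qed
  qed
  also have "\<dots> = ennreal L"
    unfolding L_def by (intro nn_integral_eq_integral int_yq) (auto intro: AE_I2)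
  also have "\<dots> \<le> ennreal (h * omega_q q (f powr q / h))" using Lle by (rule ennreal_leI)
  finally show ?thesis .
qed

end


context tree_ps
begin

definition Inv :: "'a set \<Rightarrow> nat \<Rightarrow> real \<Rightarrow> nat \<Rightarrow> 'a set set \<Rightarrow> bool" where
  "Inv I m0 t n G \<longleftrightarrow> countable G \<and> G \<subseteq> T \<and> (\<forall>K\<in>G. K \<subseteq> I \<and> (\<exists>j\<le>m0+n. K \<in> L j)) \<and>
     disjoint_family_on (\<lambda>K. K) G \<and> measure M (\<Union>G) \<le> t \<and> t - measure M (\<Union>G) \<le> s (m0 + n)"

lemma UG_sets: "countable G \<Longrightarrow> G \<subseteq> T \<Longrightarrow> \<Union>G \<in> sets M"
  using T_sets by (intro sets.countable_Union) auto

lemma Inv_step: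
  assumes I: "I \<in> L m0" and tI: "t < measure M I" and inv: "Inv I m0 t n G"
  shows "\<exists>G'. G \<subseteq> G' \<and> Inv I m0 t (Suc n) G'"
proof -
  define E where "E = \<Union>G"
  define d where "d = t - measure M E"
  define n1 where "n1 = m0 + Suc n"
  from inv have cG: "countable G" and GT: "G \<subseteq> T" and GI: "\<forall>K\<in>G. K \<subseteq> I \<and> (\<exists>j\<le>m0+n. K \<in> L j)"
    and dG: "disjoint_family_on (\<lambda>K. K) G" and mt: "measure M E \<le> t" and ds: "t - measure M E \<le> s (m0 + n)"
    by (auto simp: Inv_def E_def)
  have Es: "E \<in> sets M" unfolding E_def by (rule UG_sets[OF cG GT])
  have IT: "I \<in> T" using I L_sub_T by blast
  have EI: "E \<subseteq> I" using GI by (auto simp: E_def)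
  show ?thesis
  proof (cases "d \<le> s n1")
    case True
    have lev: "\<forall>K\<in>G. K \<subseteq> I \<and> (\<exists>j\<le>m0 + Suc n. K \<in> L j)"
    proof
      fix K assume "K \<in> G"
      then obtain j where "K \<subseteq> I" "j \<le> m0 + n" "K \<in> L j" using GI by blast
      then show "K \<subseteq> I \<and> (\<exists>j\<le>m0 + Suc n. K \<in> L j)" by (intro conjI exI[of _ j]) auto
    qed
    have "Inv I m0 t (Suc n) G"
      unfolding Inv_def using cG GT lev dG mt True by (simp add: E_def d_def n1_def)
    then show ?thesis by blast
  next
    case False
    then have dpos: "s n1 < d" by simp
    then have d0: "0 < d" using s_nonneg[of n1] by simp
    define D where "D = {K \<in> L n1. K \<subseteq> I \<and> K \<inter> E = {}}"
    have DL: "D \<subseteq> L n1" by (auto simp: D_def)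
    have cD: "countable D" using countable_subset[OF DL L_countable] .
    have DT: "D \<subseteq> T" using DL L_sub_T by blast
    have IE: "I - E \<subseteq> \<Union>D"
    proof
      fix x assume x: "x \<in> I - E"
      then have xs: "x \<in> space M" using T_sub[OF IT] by auto
      obtain K where K: "K \<in> L n1" "x \<in> K" using L_cover[OF xs] by blast
      have "K \<subseteq> I" using nest[OF I K(1)] x K(2) by (auto simp: n1_def)
      moreover have "K \<inter> E = {}"
      proof -
        have "K \<inter> K' = {}" if K': "K' \<in> G" for K'
        proof -
          obtain j where j: "j \<le> m0 + n" "K' \<in> L j" using GI K' by blast
          have "K \<subseteq> K' \<or> K' \<inter> K = {}" using nest[OF j(2) K(1)] j by (simp add: n1_def)
          then show ?thesis using x K(2) K' by (auto simp: E_def)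
        qed
        then show ?thesis by (auto simp: E_def)
      qed
      ultimately show "x \<in> \<Union>D" using K by (auto simp: D_def)
    qed
    have Ds: "\<Union>D \<in> sets M" by (rule UG_sets[OF cD DT])
    have "measure M I - measure M E \<le> measure M (\<Union>D)"
    proof -
      have "measure M (I - E) \<le> measure M (\<Union>D)" using IE Ds by (rule finite_measure_mono)
      moreover have "measure M (I - E) = measure M I - measure M E"
        using EI Es T_sets[OF IT] by (intro finite_measure_Diff) auto
      ultimately show ?thesis by simp
    qed
    then have Dbig: "d < measure M (\<Union>D)" using tI by (simp add: d_def)
    define idx where "idx = to_nat_on D"
    have inj: "inj_on idx D" unfolding idx_def using cD by (rule inj_on_to_nat_on)
    define U where "U = (\<lambda>i. \<Union>{K\<in>D. idx K \<le> i})"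
    have Us: "U i \<in> sets M" for i
      unfolding U_def using countable_subset[OF _ cD] DT by (intro UG_sets) auto
    have Uinc: "incseq U" unfolding U_def incseq_def by auto
    have UD: "(\<Union>i. U i) = \<Union>D" unfolding U_def by auto
    have "(\<lambda>i. measure M (U i)) \<longlonglongrightarrow> measure M (\<Union>D)"
      using finite_Lim_measure_incseq[of U] Us Uinc UD by auto
    then have "eventually (\<lambda>i. d < measure M (U i)) sequentially"
      using Dbig by (rule order_tendstoD)
    then obtain i0 where i0: "d < measure M (U i0)" by (auto simp: eventually_sequentially)
    define j where "j = (LEAST i. d < measure M (U i))"
    have jd: "d < measure M (U j)" unfolding j_def by (rule LeastI[of "\<lambda>i. d < measure M (U i)" i0, OF i0])
    define P where "P = {K\<in>D. idx K < j}"
    have PD: "P \<subseteq> D" by (auto simp: P_def)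
    have cP: "countable P" using countable_subset[OF PD cD] .
    have PT: "P \<subseteq> T" using PD DT by blast
    have Ps: "\<Union>P \<in> sets M" by (rule UG_sets[OF cP PT])
    have Pd: "measure M (\<Union>P) \<le> d"
    proof (cases j)
      case 0
      then have "P = {}" by (auto simp: P_def)
      then show ?thesis using d0 by simp
    next
      case (Suc j')
      have "{K\<in>D. idx K < j} = {K\<in>D. idx K \<le> j'}" using Suc by auto
      then have "\<Union>P = U j'" by (simp add: P_def U_def)
      moreover have "\<not> d < measure M (U j')" using not_less_Least[of j' "\<lambda>i. d < measure M (U i)"] Suc
        by (simp add: j_def)
      ultimately show ?thesis by simp
    qed
    have Pgap: "d - measure M (\<Union>P) < s n1"
    proof (cases "\<exists>K0\<in>D. idx K0 = j")
      case True
      then obtain K0 where K0: "K0 \<in> D" "idx K0 = j" by blast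
      have "U j \<subseteq> \<Union>P \<union> K0"
      proof
        fix x assume "x \<in> U j"
        then obtain K where K: "K \<in> D" "idx K \<le> j" "x \<in> K" by (auto simp: U_def)
        show "x \<in> \<Union>P \<union> K0"
        proof (cases "idx K = j")
          case True
          then have "K = K0" using inj K0 K by (auto dest: inj_onD)
          then show ?thesis using K by simp
        next
          case False
          then show ?thesis using K by (auto simp: P_def)
        qed
      qed
      then have "measure M (U j) \<le> measure M (\<Union>P \<union> K0)"
        using Ps K0 DT T_sets by (intro finite_measure_mono) auto
      also have "\<dots> \<le> measure M (\<Union>P) + measure M K0"
        using Ps K0 DT T_sets by (intro measure_Un_le) auto
      also have "measure M K0 \<le> s n1" using K0 DL s_upper by blast
      finally show ?thesis using jd by simp
    next
      case False
      then have "{K\<in>D. idx K \<le> j} = {K\<in>D. idx K < j}" by (auto simp: order.order_iff_strict)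
      then have "U j = \<Union>P" by (simp add: U_def P_def)
      then show ?thesis using jd Pd by simp
    qed
    define G' where "G' = G \<union> P"
    have PE: "\<Union>P \<inter> E = {}" using PD by (auto simp: D_def)
    have mG': "measure M (\<Union>G') = measure M E + measure M (\<Union>P)"
    proof -
      have "\<Union>G' = E \<union> \<Union>P" by (auto simp: G'_def E_def)
      then show ?thesis using finite_measure_Union[OF Es Ps] PE by auto
    qed
    have "Inv I m0 t (Suc n) G'"
      unfolding Inv_def
    proof (intro conjI)
      show "countable G'" using cG cP by (simp add: G'_def)
      show "G' \<subseteq> T" using GT PT by (simp add: G'_def)
      show "\<forall>K\<in>G'. K \<subseteq> I \<and> (\<exists>j\<le>m0 + Suc n. K \<in> L j)"
      proof
        fix K assume "K \<in> G'"
        then consider "K \<in> G" | "K \<in> P" by (auto simp: G'_def)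
        then show "K \<subseteq> I \<and> (\<exists>j\<le>m0 + Suc n. K \<in> L j)"
        proof cases
          case 1
          then obtain j where "K \<subseteq> I" "j \<le> m0 + n" "K \<in> L j" using GI by blast
          then show ?thesis by (intro conjI exI[of _ j]) auto
        next
          case 2
          then have "K \<in> L n1" "K \<subseteq> I" using PD by (auto simp: D_def)
          then show ?thesis by (intro conjI exI[of _ n1]) (auto simp: n1_def)
        qed
      qed
      show "disjoint_family_on (\<lambda>K. K) G'"
      proof (unfold disjoint_family_on_def, intro ballI impI)
        fix K1 K2 assume K1: "K1 \<in> G'" and K2: "K2 \<in> G'" and ne: "K1 \<noteq> K2"
        consider "K1 \<in> G" "K2 \<in> G" | "K1 \<in> G" "K2 \<in> P" | "K1 \<in> P" "K2 \<in> G" | "K1 \<in> P" "K2 \<in> P"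
          using K1 K2 by (auto simp: G'_def)
        then show "K1 \<inter> K2 = {}"
        proof cases
          case 1 then show ?thesis using dG ne by (auto simp: disjoint_family_on_def)
        next
          case 2 then show ?thesis using PE by (auto simp: E_def)
        next
          case 3 then show ?thesis using PE by (auto simp: E_def)
        next
          case 4 then show ?thesis using L_disj PD DL ne by blast
        qed
      qed
      show "measure M (\<Union>G') \<le> t" using mG' Pd by (simp add: d_def)
      show "t - measure M (\<Union>G') \<le> s (m0 + Suc n)" using mG' Pgap by (simp add: d_def n1_def)
    qed
    then show ?thesis by (auto simp: G'_def)
  qed
qed

end


context tree_ps
begin

lemma frac:
  assumes IT: "I \<in> T" and t0: "0 \<le> t" and tI: "t < measure M I"
  shows "\<exists>G. countable G \<and> G \<subseteq> T \<and> disjoint_family_on (\<lambda>K. K) G \<and> (\<forall>K\<in>G. K \<subseteq> I) \<and> measure M (\<Union>G) = t"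
proof -
  obtain m0 where I: "I \<in> L m0" using T_level[OF IT] by blast
  have "Inv I m0 t 0 {}"
    using t0 tI s_upper[OF I] by (simp add: Inv_def disjoint_family_on_def)
  then have ex0: "\<exists>G. Inv I m0 t 0 G" by blast
  have step: "\<And>x n. Inv I m0 t n x \<Longrightarrow> \<exists>y. Inv I m0 t (Suc n) y \<and> x \<subseteq> y"
    using Inv_step[OF I tI] by blast
  obtain g where g: "\<And>n. Inv I m0 t n (g n)" "\<And>n. g n \<subseteq> g (Suc n)"
    using dependent_nat_choice[of "Inv I m0 t" "\<lambda>n G G'. G \<subseteq> G'", OF ex0 step] by blast
  have gmono: "g a \<subseteq> g b" if "a \<le> b" for a b using lift_Suc_mono_le[of g, OF g(2) that] .
  define G where "G = (\<Union>n. g n)"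
  have cg: "countable (g n)" and gT: "g n \<subseteq> T" and gI: "\<forall>K\<in>g n. K \<subseteq> I"
    and gd: "disjoint_family_on (\<lambda>K. K) (g n)" and gm: "measure M (\<Union>(g n)) \<le> t"
    and gs: "t - measure M (\<Union>(g n)) \<le> s (m0 + n)" for n
    using g(1)[of n] by (auto simp: Inv_def)
  have cG: "countable G" unfolding G_def using cg by auto
  have GT: "G \<subseteq> T" unfolding G_def using gT by auto
  have GI: "\<forall>K\<in>G. K \<subseteq> I" unfolding G_def using gI by auto
  have dG: "disjoint_family_on (\<lambda>K. K) G"
  proof (unfold disjoint_family_on_def, intro ballI impI)
    fix K1 K2 assume K1: "K1 \<in> G" and K2: "K2 \<in> G" and ne: "K1 \<noteq> K2"
    obtain a b where a: "K1 \<in> g a" and b: "K2 \<in> g b" using K1 K2 by (auto simp: G_def)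
    have "K1 \<in> g (max a b)" "K2 \<in> g (max a b)" using gmono[of a "max a b"] gmono[of b "max a b"] a b by auto
    then show "K1 \<inter> K2 = {}" using gd[of "max a b"] ne by (auto simp: disjoint_family_on_def)
  qed
  define A where "A = (\<lambda>n. \<Union>(g n))"
  have As: "range A \<subseteq> sets M" unfolding A_def using UG_sets cg gT by auto
  have Ainc: "incseq A" unfolding A_def incseq_def using gmono by auto
  have UA: "(\<Union>n. A n) = \<Union>G" by (auto simp: A_def G_def)
  have lim1: "(\<lambda>n. measure M (A n)) \<longlonglongrightarrow> measure M (\<Union>G)"
    using finite_Lim_measure_incseq[OF As Ainc] UA by simp
  have lim2: "(\<lambda>n. measure M (A n)) \<longlonglongrightarrow> t"
  proof (rule tendsto_sandwich[of "\<lambda>n. t - s (m0 + n)" _ _ "\<lambda>n. t"])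
    show "\<forall>\<^sub>F n in sequentially. t - s (m0 + n) \<le> measure M (A n)" using gs by (intro always_eventually allI) (simp add: A_def algebra_simps)
    show "\<forall>\<^sub>F n in sequentially. measure M (A n) \<le> t" using gm by (intro always_eventually allI) (simp add: A_def)
    have "(\<lambda>n. s (n + m0)) \<longlonglongrightarrow> 0" using LIMSEQ_ignore_initial_segment[OF s_lim, of m0] .
    then have "(\<lambda>n. s (m0 + n)) \<longlonglongrightarrow> 0" by (simp add: add.commute)
    then show "(\<lambda>n. t - s (m0 + n)) \<longlonglongrightarrow> t" using tendsto_diff[OF tendsto_const, of _ 0 sequentially t] by simp
  qed simp
  have "measure M (\<Union>G) = t" using LIMSEQ_unique[OF lim1 lim2] .
  then show ?thesis using cG GT dG GI by blast
qed

end


context tree_ps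
begin

definition famP :: "real \<Rightarrow> 'a set \<Rightarrow> 'a set set \<Rightarrow> bool" where
  "famP b I G \<longleftrightarrow> countable G \<and> G \<subseteq> T \<and> disjoint_family_on (\<lambda>K. K) G \<and> (\<forall>K\<in>G. K \<subseteq> I)
     \<and> measure M (\<Union>G) = b * measure M I"

definition famf :: "real \<Rightarrow> 'a set \<Rightarrow> 'a set set" where
  "famf b I = (SOME G. famP b I G)"

lemma famf_P:
  assumes b: "0 \<le> b" "b < 1" and I: "I \<in> T"
  shows "famP b I (famf b I)"
proof -
  have "0 \<le> b * measure M I" using b by simp
  moreover have "b * measure M I < measure M I" using b T_pos[OF I] by simp
  ultimately have "\<exists>G. famP b I G" using frac[OF I] by (auto simp: famP_def)
  then show ?thesis unfolding famf_def by (rule someI_ex)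
qed

primrec Fam :: "real \<Rightarrow> nat \<Rightarrow> 'a set set" where
  "Fam b 0 = {space M}"
| "Fam b (Suc k) = (\<Union>J\<in>Fam b k. famf b J)"

definition AA :: "real \<Rightarrow> nat \<Rightarrow> 'a set" where
  "AA b k = \<Union>(Fam b k)"

context
  fixes b :: real
  assumes b: "0 < b" "b < 1"
begin

lemma Fam_T: "Fam b k \<subseteq> T"
proof (induction k)
  case 0 then show ?case using T_space by simp
next
  case (Suc k)
  have "famf b J \<subseteq> T" if "J \<in> Fam b k" for J
    using famf_P[OF less_imp_le[OF b(1)] b(2), of J] Suc that by (auto simp: famP_def)
  then show ?case by auto
qed

lemma Fam_countable: "countable (Fam b k)"
proof (induction k)
  case 0 then show ?case by simp
next
  case (Suc k)
  have "countable (famf b J)" if "J \<in> Fam b k" for J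
    using famf_P[OF less_imp_le[OF b(1)] b(2)] Fam_T that by (auto simp: famP_def)
  then show ?case using Suc by auto
qed

lemma famf_sub: "J \<in> T \<Longrightarrow> K \<in> famf b J \<Longrightarrow> K \<subseteq> J"
  using famf_P[OF less_imp_le[OF b(1)] b(2)] by (auto simp: famP_def)

lemma Fam_disj: "J1 \<in> Fam b k \<Longrightarrow> J2 \<in> Fam b k \<Longrightarrow> J1 \<noteq> J2 \<Longrightarrow> J1 \<inter> J2 = {}"
proof (induction k arbitrary: J1 J2)
  case 0 then show ?case by simp
next
  case (Suc k)
  from Suc.prems obtain I1 I2 where I1: "I1 \<in> Fam b k" "J1 \<in> famf b I1" and I2: "I2 \<in> Fam b k" "J2 \<in> famf b I2"
    by auto
  have I1T: "I1 \<in> T" and I2T: "I2 \<in> T" using I1 I2 Fam_T by blast+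
  show ?case
  proof (cases "I1 = I2")
    case True
    then show ?thesis using famf_P[OF less_imp_le[OF b(1)] b(2) I1T] I1 I2 Suc.prems
      by (auto simp: famP_def disjoint_family_on_def)
  next
    case False
    then have "I1 \<inter> I2 = {}" using Suc.IH I1 I2 by blast
    moreover have "J1 \<subseteq> I1" "J2 \<subseteq> I2" using famf_sub I1 I2 I1T I2T by blast+
    ultimately show ?thesis by blast
  qed
qed

lemma AA_sets: "AA b k \<in> sets M"
  unfolding AA_def using Fam_countable Fam_T by (rule UG_sets)

lemma AA_Suc: "AA b (Suc k) \<subseteq> AA b k"
  unfolding AA_def using famf_sub Fam_T by fastforce

lemma AA_mono: "k \<le> k' \<Longrightarrow> AA b k' \<subseteq> AA b k"
proof (induction k' rule: dec_induct)
  case base then show ?case by simp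
next
  case (step n) then show ?case using AA_Suc[of n] by blast
qed

lemma AA_split:
  assumes J: "J \<in> Fam b k"
  shows "J \<inter> AA b (Suc k + m) = (\<Union>K\<in>famf b J. K \<inter> AA b (Suc k + m))"
proof
  have JT: "J \<in> T" using J Fam_T by blast
  show "J \<inter> AA b (Suc k + m) \<subseteq> (\<Union>K\<in>famf b J. K \<inter> AA b (Suc k + m))"
  proof
    fix x assume x: "x \<in> J \<inter> AA b (Suc k + m)"
    then have "x \<in> AA b (Suc k)" using AA_mono[of "Suc k" "Suc k + m"] by auto
    then obtain J' K where J': "J' \<in> Fam b k" "K \<in> famf b J'" "x \<in> K" by (auto simp: AA_def)
    have "K \<subseteq> J'" using famf_sub J' Fam_T by blast
    then have "J' = J" using Fam_disj[OF J'(1) J] x J'(3) by blast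
    then show "x \<in> (\<Union>K\<in>famf b J. K \<inter> AA b (Suc k + m))" using J' x by blast
  qed
  show "(\<Union>K\<in>famf b J. K \<inter> AA b (Suc k + m)) \<subseteq> J \<inter> AA b (Suc k + m)"
    using famf_sub JT by blast
qed

lemma AA_frac:
  "J \<in> Fam b k \<Longrightarrow> measure M (J \<inter> AA b (k + m)) = b ^ m * measure M J"
proof (induction m arbitrary: k J)
  case 0
  then have "J \<subseteq> AA b k" by (auto simp: AA_def)
  then show ?case by (simp add: Int_absorb2)
next
  case (Suc m)
  have JT: "J \<in> T" using Suc.prems Fam_T by blast
  have fP: "famP b J (famf b J)" using famf_P[OF less_imp_le[OF b(1)] b(2) JT] .
  define G where "G = famf b J"
  have cG: "countable G" and GT: "G \<subseteq> T" and dG: "disjoint_family_on (\<lambda>K. K) G"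
    and mG: "measure M (\<Union>G) = b * measure M J"
    using fP by (auto simp: famP_def G_def)
  have GF: "G \<subseteq> Fam b (Suc k)" using Suc.prems by (auto simp: G_def)
  have eqs: "J \<inter> AA b (k + Suc m) = (\<Union>K\<in>G. K \<inter> AA b (Suc k + m))"
    using AA_split[OF Suc.prems, of m] by (simp add: G_def)
  have dG2: "disjoint_family_on (\<lambda>K. K \<inter> AA b (Suc k + m)) G"
    using dG by (auto simp: disjoint_family_on_def)
  have sets2: "K \<inter> AA b (Suc k + m) \<in> sets M" if "K \<in> G" for K
    using GT that T_sets AA_sets by blast
  have "emeasure M (J \<inter> AA b (k + Suc m)) = (\<integral>\<^sup>+K. emeasure M (K \<inter> AA b (Suc k + m)) \<partial>count_space G)"
    unfolding eqs by (rule emeasure_UN_countable[OF sets2 cG dG2])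
  also have "\<dots> = (\<integral>\<^sup>+K. ennreal (b ^ m) * emeasure M K \<partial>count_space G)"
  proof (rule nn_integral_cong)
    fix K assume "K \<in> space (count_space G)"
    then have K: "K \<in> G" by simp
    then have "measure M (K \<inter> AA b (Suc k + m)) = b ^ m * measure M K" using Suc.IH GF by blast
    then show "emeasure M (K \<inter> AA b (Suc k + m)) = ennreal (b ^ m) * emeasure M K"
      using b by (simp add: emeasure_eq_measure ennreal_mult)
  qed
  also have "\<dots> = ennreal (b ^ m) * (\<integral>\<^sup>+K. emeasure M K \<partial>count_space G)"
    by (simp add: nn_integral_cmult)
  also have "(\<integral>\<^sup>+K. emeasure M K \<partial>count_space G) = emeasure M (\<Union>G)"
    using emeasure_UN_countable[of G "\<lambda>K. K" M] cG dG GT T_sets by (auto simp: subset_eq)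
  also have "ennreal (b ^ m) * emeasure M (\<Union>G) = ennreal (b ^ Suc m * measure M J)"
    using mG b by (simp add: emeasure_eq_measure ennreal_mult[symmetric] mult.assoc)
  finally show ?case using b by (simp add: emeasure_eq_measure)
qed

lemma AA_measure: "measure M (AA b k) = b ^ k"
  using AA_frac[of "space M" 0 k] AA_sets[of k] sets.sets_into_space by (simp add: Int_absorb1 prob_space)

end

end


context tree_ps
begin

definition BB :: "real \<Rightarrow> nat \<Rightarrow> 'a set" where
  "BB b k = AA b k - AA b (Suc k)"

definition phi :: "real \<Rightarrow> real \<Rightarrow> real \<Rightarrow> 'a \<Rightarrow> real" where
  "phi b c r x = (\<Sum>k. c * r ^ k * indicator (BB b k) x)"

context
  fixes b :: real
  assumes b: "0 < b" "b < 1"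
begin

lemma BB_sets: "BB b k \<in> sets M"
  unfolding BB_def using AA_sets[OF b] by auto

lemma BB_disj: "j \<noteq> k \<Longrightarrow> BB b j \<inter> BB b k = {}"
proof -
  have *: "BB b j \<inter> BB b k = {}" if "j < k" for j k
  proof -
    have "AA b k \<subseteq> AA b (Suc j)" using AA_mono[OF b, of "Suc j" k] that by simp
    then show ?thesis by (auto simp: BB_def)
  qed
  assume "j \<noteq> k"
  then consider "j < k" | "k < j" by linarith
  then show ?thesis by cases (use * in blast)+
qed

lemma BB_J:
  assumes J: "J \<in> Fam b k"
  shows "measure M (J \<inter> BB b j) = (if j < k then 0 else b ^ (j - k) * (1 - b) * measure M J)"
proof (cases "j < k")
  case True
  have "J \<subseteq> AA b k" using J by (auto simp: AA_def)
  also have "AA b k \<subseteq> AA b (Suc j)" using AA_mono[OF b, of "Suc j" k] True by simp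
  finally have "J \<inter> BB b j = {}" by (auto simp: BB_def)
  then show ?thesis using True by simp
next
  case False
  have JT: "J \<in> T" using J Fam_T[OF b] by blast
  have eq: "J \<inter> BB b j = (J \<inter> AA b (k + (j - k))) - (J \<inter> AA b (k + Suc (j - k)))"
    using False by (auto simp: BB_def)
  have "measure M (J \<inter> BB b j) = measure M (J \<inter> AA b (k + (j - k))) - measure M (J \<inter> AA b (k + Suc (j - k)))"
    unfolding eq
    using T_sets[OF JT] AA_sets[OF b] AA_Suc[OF b, of "k + (j - k)"]
    by (intro finite_measure_Diff) auto
  also have "\<dots> = b ^ (j - k) * (1 - b) * measure M J"
  proof -
    have a1: "measure M (J \<inter> AA b (k + (j - k))) = b ^ (j - k) * measure M J" by (rule AA_frac[OF b J])
    have a2: "measure M (J \<inter> AA b (k + Suc (j - k))) = b ^ Suc (j - k) * measure M J" by (rule AA_frac[OF b J])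
    show ?thesis unfolding a1 a2 by (simp add: algebra_simps)
  qed
  finally show ?thesis using False by simp
qed

lemma BB_measure: "measure M (BB b k) = b ^ k * (1 - b)"
  using BB_J[of "space M" 0 k] sets.sets_into_space[OF BB_sets[of k]]
  by (simp add: Int_absorb1 prob_space)

lemma enn_G:
  fixes G :: "real \<Rightarrow> real"
  assumes G0: "G 0 = 0"
  shows "ennreal (G (phi b c r x)) = (\<Sum>k. ennreal (G (c * r ^ k)) * indicator (BB b k) x)"
proof (cases "\<exists>k. x \<in> BB b k")
  case True
  then obtain k where k: "x \<in> BB b k" by blast
  have z: "j \<noteq> k \<Longrightarrow> x \<notin> BB b j" for j using BB_disj[of j k] k by blast
  have "phi b c r x = (\<Sum>j\<in>{k}. c * r ^ j * indicator (BB b j) x)"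
    unfolding phi_def by (rule suminf_finite) (use z in auto)
  then have p: "phi b c r x = c * r ^ k" using k by simp
  have "(\<Sum>j. ennreal (G (c * r ^ j)) * indicator (BB b j) x) = (\<Sum>j\<in>{k}. ennreal (G (c * r ^ j)) * indicator (BB b j) x)"
    by (rule suminf_finite) (use z in auto)
  then show ?thesis using p k by simp
next
  case False
  then have "phi b c r x = 0" by (simp add: phi_def)
  then show ?thesis using False G0 by simp
qed

lemma phi_measurable: "phi b c r \<in> borel_measurable M"
  unfolding phi_def using BB_sets by measurable

lemma phi_BB: "x \<in> BB b k \<Longrightarrow> phi b c r x = c * r ^ k"
proof -
  assume k: "x \<in> BB b k"
  have z: "j \<noteq> k \<Longrightarrow> x \<notin> BB b j" for j using BB_disj[of j k] k by blast
  have "phi b c r x = (\<Sum>j\<in>{k}. c * r ^ j * indicator (BB b j) x)"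
    unfolding phi_def by (rule suminf_finite) (use z in auto)
  then show ?thesis using k by simp
qed

lemma phi_nn: "0 \<le> c \<Longrightarrow> 0 \<le> r \<Longrightarrow> 0 \<le> phi b c r x"
proof (cases "\<exists>k. x \<in> BB b k")
  case True
  assume "0 \<le> c" "0 \<le> r"
  then show ?thesis using True phi_BB by auto
next
  case False
  then show ?thesis by (simp add: phi_def)
qed

lemma int_G:
  fixes G :: "real \<Rightarrow> real"
  assumes G0: "G 0 = 0" and Gnn: "\<And>k. 0 \<le> G (c * r ^ k)"
  shows "(\<integral>\<^sup>+x. ennreal (G (phi b c r x)) \<partial>M) = (\<Sum>k. ennreal (G (c * r ^ k) * (b ^ k * (1 - b))))"
proof -
  have "(\<integral>\<^sup>+x. ennreal (G (phi b c r x)) \<partial>M) = (\<integral>\<^sup>+x. (\<Sum>k. ennreal (G (c * r ^ k)) * indicator (BB b k) x) \<partial>M)"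
    by (intro nn_integral_cong) (simp add: enn_G[of G, OF G0])
  also have "\<dots> = (\<Sum>k. (\<integral>\<^sup>+x. ennreal (G (c * r ^ k)) * indicator (BB b k) x \<partial>M))"
    by (rule nn_integral_suminf) (use BB_sets in measurable)
  also have "\<dots> = (\<Sum>k. ennreal (G (c * r ^ k) * (b ^ k * (1 - b))))"
  proof (intro suminf_cong)
    fix k
    have "(\<integral>\<^sup>+x. ennreal (G (c * r ^ k)) * indicator (BB b k) x \<partial>M) = ennreal (G (c * r ^ k)) * emeasure M (BB b k)"
      by (rule nn_integral_cmult_indicator[OF BB_sets])
    also have "\<dots> = ennreal (G (c * r ^ k) * (b ^ k * (1 - b)))"
      using Gnn[of k] b by (simp add: emeasure_eq_measure BB_measure ennreal_mult)
    finally show "(\<integral>\<^sup>+x. ennreal (G (c * r ^ k)) * indicator (BB b k) x \<partial>M) = ennreal (G (c * r ^ k) * (b ^ k * (1 - b)))" .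
  qed
  finally show ?thesis .
qed

lemma int_J:
  assumes J: "J \<in> Fam b k" and c: "0 \<le> c" and r: "0 \<le> r"
  shows "(\<integral>\<^sup>+x. ennreal \<bar>phi b c r x\<bar> * indicator J x \<partial>M)
     = (\<Sum>j. ennreal (c * r ^ j * (if j < k then 0 else b ^ (j - k) * (1 - b) * measure M J)))"
proof -
  have JT: "J \<in> T" using J Fam_T[OF b] by blast
  have Js: "J \<in> sets M" using T_sets[OF JT] .
  have "(\<integral>\<^sup>+x. ennreal \<bar>phi b c r x\<bar> * indicator J x \<partial>M)
      = (\<integral>\<^sup>+x. (\<Sum>j. ennreal (c * r ^ j) * indicator (J \<inter> BB b j) x) \<partial>M)"
  proof (intro nn_integral_cong)
    fix x
    have "ennreal \<bar>phi b c r x\<bar> = (\<Sum>j. ennreal \<bar>c * r ^ j\<bar> * indicator (BB b j) x)"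
      by (rule enn_G) simp
    then have "ennreal \<bar>phi b c r x\<bar> * indicator J x = (\<Sum>j. ennreal \<bar>c * r ^ j\<bar> * indicator (BB b j) x) * indicator J x"
      by simp
    also have "\<dots> = (\<Sum>j. ennreal \<bar>c * r ^ j\<bar> * indicator (BB b j) x * indicator J x)"
      by (simp add: ennreal_suminf_multc)
    also have "\<dots> = (\<Sum>j. ennreal (c * r ^ j) * indicator (J \<inter> BB b j) x)"
      using c r by (intro suminf_cong) (auto simp: indicator_def)
    finally show "ennreal \<bar>phi b c r x\<bar> * indicator J x = (\<Sum>j. ennreal (c * r ^ j) * indicator (J \<inter> BB b j) x)" .
  qed
  also have "\<dots> = (\<Sum>j. (\<integral>\<^sup>+x. ennreal (c * r ^ j) * indicator (J \<inter> BB b j) x \<partial>M))"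
    by (rule nn_integral_suminf) (use BB_sets Js in measurable)
  also have "\<dots> = (\<Sum>j. ennreal (c * r ^ j * (if j < k then 0 else b ^ (j - k) * (1 - b) * measure M J)))"
  proof (intro suminf_cong)
    fix j
    have "(\<integral>\<^sup>+x. ennreal (c * r ^ j) * indicator (J \<inter> BB b j) x \<partial>M) = ennreal (c * r ^ j) * emeasure M (J \<inter> BB b j)"
      using BB_sets Js by (intro nn_integral_cmult_indicator) auto
    also have "\<dots> = ennreal (c * r ^ j * (if j < k then 0 else b ^ (j - k) * (1 - b) * measure M J))"
      using c r b by (simp add: emeasure_eq_measure BB_J[OF J] ennreal_mult)
    finally show "(\<integral>\<^sup>+x. ennreal (c * r ^ j) * indicator (J \<inter> BB b j) x \<partial>M) = ennreal (c * r ^ j * (if j < k then 0 else b ^ (j - k) * (1 - b) * measure M J))" .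
  qed
  finally show ?thesis .
qed

end

end


lemma geo_enn:
  fixes C \<rho> :: real
  assumes "0 \<le> C" "0 \<le> \<rho>" "\<rho> < 1"
  shows "(\<Sum>k. ennreal (C * \<rho> ^ k)) = ennreal (C / (1 - \<rho>))"
proof -
  have s: "(\<lambda>k. C * \<rho> ^ k) sums (C * (1 / (1 - \<rho>)))"
    using geometric_sums[of \<rho>] assms by (intro sums_mult) auto
  have "(\<Sum>k. ennreal (C * \<rho> ^ k)) = ennreal (\<Sum>k. C * \<rho> ^ k)"
    using assms s by (intro suminf_ennreal2) (auto simp: sums_iff)
  also have "\<dots> = ennreal (C / (1 - \<rho>))" using s by (simp add: sums_iff)
  finally show ?thesis .
qed

lemma pw_geo:
  fixes C r q :: real
  assumes "0 \<le> C" "0 < r"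
  shows "(C * r ^ k) powr q = C powr q * (r powr q) ^ k"
proof -
  have "(r ^ k) powr q = (r powr q) ^ k"
    using assms by (simp add: powr_power powr_powr mult.commute flip: powr_realpow)
  then show ?thesis by (simp add: powr_mult)
qed

lemma shift_sum:
  fixes c r b m :: real
  assumes c: "0 \<le> c" and r: "0 \<le> r" and b: "0 < b" "b < 1" and rb: "r * b < 1" and m: "0 \<le> m"
  shows "(\<Sum>j. ennreal (c * r ^ j * (if j < k then 0 else b ^ (j - k) * (1 - b) * m)))
     = ennreal (c * r ^ k * (1 - b) * m / (1 - r * b))"
proof -
  define f where "f = (\<lambda>j. c * r ^ j * (if j < k then 0 else b ^ (j - k) * (1 - b) * m))"
  define C where "C = c * r ^ k * (1 - b) * m"
  have sh: "(\<lambda>i. f (i + k)) = (\<lambda>i. C * (r * b) ^ i)"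
    by (auto simp: f_def C_def power_add power_mult_distrib algebra_simps)
  have "(\<lambda>i. C * (r * b) ^ i) sums (C * (1 / (1 - r * b)))"
    using geometric_sums[of "r * b"] rb r b by (intro sums_mult) auto
  then have "(\<lambda>i. f (i + k)) sums (C / (1 - r * b))" using sh by simp
  then have fs: "f sums (C / (1 - r * b) + (\<Sum>i<k. f i))" by (simp add: sums_iff_shift)
  have "(\<Sum>i<k. f i) = 0" by (auto simp: f_def intro!: sum.neutral)
  with fs have fs2: "f sums (C / (1 - r * b))" by simp
  have "(\<Sum>j. ennreal (f j)) = ennreal (suminf f)"
    using fs2 c r b m by (intro suminf_ennreal2) (auto simp: f_def sums_iff)
  also have "\<dots> = ennreal (C / (1 - r * b))" using fs2 by (simp add: sums_iff)
  finally show ?thesis by (simp add: f_def C_def)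
qed

context tree_ps
begin

context
  fixes b :: real
  assumes b: "0 < b" "b < 1"
begin

lemma avg_phi:
  assumes J: "J \<in> Fam b k" and c: "0 \<le> c" and r: "0 \<le> r" and rb: "r * b < 1"
  shows "avg (phi b c r) J = ennreal (c * (1 - b) / (1 - r * b) * r ^ k)"
proof -
  have JT: "J \<in> T" using J Fam_T[OF b] by blast
  have mJ: "0 < measure M J" using T_pos[OF JT] .
  have "avg (phi b c r) J = ennreal (1 / measure M J) * ennreal (c * r ^ k * (1 - b) * measure M J / (1 - r * b))"
    unfolding avg_def int_J[OF b J c r] shift_sum[OF c r b rb measure_nonneg] ..
  also have "\<dots> = ennreal (1 / measure M J * (c * r ^ k * (1 - b) * measure M J / (1 - r * b)))"
    by (rule ennreal_mult'[symmetric]) (use mJ in simp)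
  also have "1 / measure M J * (c * r ^ k * (1 - b) * measure M J / (1 - r * b)) = c * (1 - b) / (1 - r * b) * r ^ k"
  proof -
    have aux: "1 / m * (A * m / D) = A / D" if "m \<noteq> 0" "D \<noteq> 0" for m A D :: real
      using that by (simp add: field_simps)
    have "1 - r * b \<noteq> 0" using rb by simp
    then show ?thesis using aux[of "measure M J" "1 - r * b" "c * r ^ k * (1 - b)"] mJ by (simp add: algebra_simps)
  qed
  finally show ?thesis .
qed

lemma psi_low:
  assumes x: "x \<in> AA b k" and c: "0 \<le> c" and r: "0 \<le> r" and rb: "r * b < 1"
  shows "ennreal (c * (1 - b) / (1 - r * b) * r ^ k) \<le> dyadic_max M T (phi b c r) x"
proof -
  obtain J where J: "J \<in> Fam b k" "x \<in> J" using x by (auto simp: AA_def)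
  have JT: "J \<in> T" using J Fam_T[OF b] by blast
  have "avg (phi b c r) J \<le> dyadic_max M T (phi b c r) x" by (rule dm_ge_avg[OF JT J(2)])
  then show ?thesis using avg_phi[OF J(1) c r rb] by simp
qed

lemma BB_AA: "x \<in> BB b k \<Longrightarrow> x \<in> AA b k" by (simp add: BB_def)

lemma int_phi:
  assumes c: "0 \<le> c" and r: "0 < r" and rb: "r * b < 1"
  shows "(\<integral>\<^sup>+x. ennreal (phi b c r x) \<partial>M) = ennreal (c * (1 - b) / (1 - r * b))"
proof -
  have "(\<integral>\<^sup>+x. ennreal ((\<lambda>v. v) (phi b c r x)) \<partial>M) = (\<Sum>k. ennreal (c * r ^ k * (b ^ k * (1 - b))))"
    by (rule int_G[OF b]) (use c r in auto)
  also have "\<dots> = (\<Sum>k. ennreal (c * (1 - b) * (r * b) ^ k))"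
    by (simp add: power_mult_distrib algebra_simps)
  also have "\<dots> = ennreal (c * (1 - b) / (1 - r * b))"
    using c r b rb by (intro geo_enn) auto
  finally show ?thesis by simp
qed

lemma int_phiq:
  assumes q: "0 < q" and c: "0 \<le> c" and r: "0 < r" and rqb: "r powr q * b < 1"
  shows "(\<integral>\<^sup>+x. ennreal (phi b c r x powr q) \<partial>M) = ennreal (c powr q * (1 - b) / (1 - r powr q * b))"
proof -
  have "(\<integral>\<^sup>+x. ennreal ((\<lambda>v. v powr q) (phi b c r x)) \<partial>M) = (\<Sum>k. ennreal ((c * r ^ k) powr q * (b ^ k * (1 - b))))"
    by (rule int_G[OF b]) (use c r in auto)
  also have "\<dots> = (\<Sum>k. ennreal (c powr q * (1 - b) * (r powr q * b) ^ k))"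
    using c r by (simp add: pw_geo power_mult_distrib algebra_simps)
  also have "\<dots> = ennreal (c powr q * (1 - b) / (1 - r powr q * b))"
    using c r b rqb by (intro geo_enn) auto
  finally show ?thesis by simp
qed

lemma int_psi_low:
  assumes q: "0 < q" and c: "0 < c" and r: "0 < r" and rb: "r * b < 1" and rqb: "r powr q * b < 1"
  shows "ennreal ((c * (1 - b) / (1 - r * b)) powr q * (1 - b) / (1 - r powr q * b))
      \<le> (\<integral>\<^sup>+x. ennpow (dyadic_max M T (phi b c r) x) q \<partial>M)"
proof -
  define F where "F = c * (1 - b) / (1 - r * b)"
  have F0: "0 < F" using c b rb by (simp add: F_def)
  define G where "G = (\<lambda>v. (F / c * v) powr q)"
  have G0: "G 0 = 0" by (simp add: G_def)
  have Gk: "G (c * r ^ k) = (F * r ^ k) powr q" for k using c by (simp add: G_def)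
  have "(\<integral>\<^sup>+x. ennreal (G (phi b c r x)) \<partial>M) = (\<Sum>k. ennreal (G (c * r ^ k) * (b ^ k * (1 - b))))"
    by (rule int_G[OF b, where G=G]) (simp_all add: G0 G_def)
  also have "\<dots> = (\<Sum>k. ennreal (F powr q * (1 - b) * (r powr q * b) ^ k))"
    using F0 r by (simp add: Gk pw_geo power_mult_distrib algebra_simps)
  also have "\<dots> = ennreal (F powr q * (1 - b) / (1 - r powr q * b))"
    using b rqb by (intro geo_enn) auto
  finally have eqG: "(\<integral>\<^sup>+x. ennreal (G (phi b c r x)) \<partial>M) = ennreal (F powr q * (1 - b) / (1 - r powr q * b))" .
  have "(\<integral>\<^sup>+x. ennreal (G (phi b c r x)) \<partial>M) \<le> (\<integral>\<^sup>+x. ennpow (dyadic_max M T (phi b c r) x) q \<partial>M)"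
  proof (rule nn_integral_mono)
    fix x assume "x \<in> space M"
    show "ennreal (G (phi b c r x)) \<le> ennpow (dyadic_max M T (phi b c r) x) q"
    proof (cases "\<exists>k. x \<in> BB b k")
      case True
      then obtain k where k: "x \<in> BB b k" by blast
      have pk: "phi b c r x = c * r ^ k" by (rule phi_BB[OF b k])
      have low: "ennreal (F * r ^ k) \<le> dyadic_max M T (phi b c r) x"
        using psi_low[OF BB_AA[OF k]] c r rb by (simp add: F_def)
      show ?thesis
      proof (cases "dyadic_max M T (phi b c r) x = \<top>")
        case True then show ?thesis by (simp add: ennpow_def)
      next
        case False
        then have "F * r ^ k \<le> enn2real (dyadic_max M T (phi b c r) x)"
          using low F0 r by (metis enn2real_ennreal enn2real_mono top.not_eq_extremum zero_le_mult_iff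
              less_imp_le zero_le_power)
        then have "(F * r ^ k) powr q \<le> enn2real (dyadic_max M T (phi b c r) x) powr q"
          using F0 r q by (intro powr_mono2) auto
        then show ?thesis using False by (simp add: ennpow_def pk Gk)
      qed
    next
      case False
      then have "phi b c r x = 0" by (simp add: phi_def)
      then show ?thesis using G0 by simp
    qed
  qed
  then show ?thesis using eqG by (simp add: F_def)
qed

end

end


context tree_ps
begin

lemma lower:
  fixes q f h :: real
  assumes q: "0 < q" "q < 1" and f: "0 < f" and h: "0 < h" and hf: "h \<le> f powr q"
  shows "ennreal (h * omega_q q (f powr q / h)) \<le> Bellman_q M T q f h"
proof (rule ennreal_le_epsilon)
  fix e :: real assume e: "0 < e"
  define u where "u = f powr q / h"
  have u1: "1 \<le> u" using hf h by (simp add: u_def)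
  have eh: "0 < e / h" using e h by simp
  obtain b r where b: "0 < b" "b < 1" and r: "1 \<le> r" and rb: "r * b < 1"
    and gu: "((1 - b) / (1 - r * b)) powr q * (1 - r powr q * b) / (1 - b) = u"
    and om: "omega_q q u - e / h < ((1 - b) / (1 - r * b)) powr q"
    using lower_params[OF q u1 eh] by blast
  define w where "w = (1 - b) / (1 - r * b)"
  have w0: "0 < w" using b rb by (simp add: w_def)
  define c where "c = f / w"
  have c0: "0 < c" using f w0 by (simp add: c_def)
  have r0: "0 < r" using r by simp
  have rq: "r powr q \<le> r" using powr_mono[of q 1 r] q r by simp
  have rqb: "r powr q * b < 1" using rq b rb by (meson le_less_trans mult_right_mono less_imp_le)
  have rqb': "0 < 1 - r powr q * b" using rqb by simp
  define \<phi> where "\<phi> = phi b c r"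
  have phim[measurable]: "\<phi> \<in> borel_measurable M" unfolding \<phi>_def by (rule phi_measurable[OF b])
  have nn: "\<forall>x\<in>space M. 0 \<le> \<phi> x" using phi_nn[OF b] c0 r0 by (simp add: \<phi>_def)
  have F: "c * (1 - b) / (1 - r * b) = f" using w0 b rb by (simp add: c_def w_def)
  have i1: "(\<integral>\<^sup>+x. ennreal (\<phi> x) \<partial>M) = ennreal f"
    using int_phi[OF b, of c r] c0 r0 rb F by (simp add: \<phi>_def)
  have int: "integrable M \<phi>"
    by (rule integrableI_nn_integral_finite[OF phim _ i1]) (use nn in \<open>auto intro: AE_I2\<close>)
  have If: "(\<integral>x. \<phi> x \<partial>M) = f"
  proof -
    have "ennreal (\<integral>x. \<phi> x \<partial>M) = ennreal f"
      using nn_integral_eq_integral[OF int] nn i1 by (simp add: AE_I2)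
    moreover have "0 \<le> (\<integral>x. \<phi> x \<partial>M)" using nn by (intro integral_nonneg_AE AE_I2) auto
    ultimately show ?thesis using f by simp
  qed
  define hq where "hq = c powr q * (1 - b) / (1 - r powr q * b)"
  have hq_eq: "hq = h"
  proof -
    have "c powr q = f powr q / w powr q" using f w0 by (simp add: c_def powr_divide)
    moreover have "u = w powr q * (1 - r powr q * b) / (1 - b)" using gu by (simp add: w_def)
    moreover have aux: "(Fv / W) * E / D = Fv / (W * D / E)" if "W \<noteq> 0" "D \<noteq> 0" "E \<noteq> 0" for Fv W D E :: real
      using that by (simp add: field_simps)
    ultimately have "hq = f powr q / u"
      using b rqb' w0 aux[of "w powr q" "1 - r powr q * b" "1 - b" "f powr q"] by (simp add: hq_def)
    then show ?thesis using h f by (simp add: u_def)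
  qed
  have i2: "(\<integral>\<^sup>+x. ennreal (\<phi> x powr q) \<partial>M) = ennreal h"
    using int_phiq[OF b q(1), of c r] c0 r0 rqb hq_eq by (simp add: \<phi>_def hq_def)
  have phqm: "(\<lambda>x. \<phi> x powr q) \<in> borel_measurable M" by measurable
  have intq: "integrable M (\<lambda>x. \<phi> x powr q)"
    by (rule integrableI_nn_integral_finite[OF phqm _ i2]) (auto intro: AE_I2)
  have Ih: "(\<integral>x. \<phi> x powr q \<partial>M) = h"
  proof -
    have "ennreal (\<integral>x. \<phi> x powr q \<partial>M) = ennreal h"
      using nn_integral_eq_integral[OF intq] i2 by (simp add: AE_I2)
    moreover have "0 \<le> (\<integral>x. \<phi> x powr q \<partial>M)" by (intro integral_nonneg_AE AE_I2) auto
    ultimately show ?thesis using h by simp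
  qed
  have low: "ennreal (f powr q * (1 - b) / (1 - r powr q * b)) \<le> (\<integral>\<^sup>+x. ennpow (dyadic_max M T \<phi> x) q \<partial>M)"
    using int_psi_low[OF b q(1) c0 r0 rb rqb] F by (simp add: \<phi>_def)
  have val: "f powr q * (1 - b) / (1 - r powr q * b) = h * w powr q"
  proof -
    have "u = w powr q * (1 - r powr q * b) / (1 - b)" using gu by (simp add: w_def)
    moreover have aux: "Fv * E / D = Fv / (W * D / E) * W" if "W \<noteq> 0" "D \<noteq> 0" "E \<noteq> 0" for Fv W D E :: real
      using that by (simp add: field_simps)
    ultimately have "f powr q * (1 - b) / (1 - r powr q * b) = f powr q / u * w powr q"
      using b rqb' w0 aux[of "w powr q" "1 - r powr q * b" "1 - b" "f powr q"] by simp
    then show ?thesis using h f by (simp add: u_def)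
  qed
  have "(\<integral>\<^sup>+x. ennpow (dyadic_max M T \<phi> x) q \<partial>M) \<le> Bellman_q M T q f h"
    unfolding Bellman_q_def using int nn If Ih by (intro SUP_upper) auto
  with low val have B: "ennreal (h * w powr q) \<le> Bellman_q M T q f h" by simp
  have "h * omega_q q (f powr q / h) \<le> h * w powr q + e"
  proof -
    have "h * (omega_q q u - e / h) \<le> h * w powr q" using om h by (simp add: w_def)
    then show ?thesis using h by (simp add: u_def algebra_simps)
  qed
  then have "ennreal (h * omega_q q (f powr q / h)) \<le> ennreal (h * w powr q + e)"
    by (rule ennreal_leI)
  also have "\<dots> = ennreal (h * w powr q) + ennreal e"
    using h e by (intro ennreal_plus) auto
  also have "\<dots> \<le> Bellman_q M T q f h + ennreal e" using B by (intro add_right_mono)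
  finally show "ennreal (h * omega_q q (f powr q / h)) \<le> Bellman_q M T q f h + ennreal e" .
qed

lemma main:
  fixes q f h :: real
  assumes q: "0 < q" "q < 1" and f: "0 < f" and h: "0 < h" and hf: "h \<le> f powr q"
  shows "Bellman_q M T q f h = ennreal (h * omega_q q (f powr q / h))"
proof (rule antisym)
  show "Bellman_q M T q f h \<le> ennreal (h * omega_q q (f powr q / h))"
    unfolding Bellman_q_def
    by (rule SUP_least) (use upper_one[OF q f h hf] in auto)
  show "ennreal (h * omega_q q (f powr q / h)) \<le> Bellman_q M T q f h"
    by (rule lower[OF q f h hf])
qed

end

theorem theorem1:
  fixes M :: "'a measure" and T :: "'a set set" and q f h :: real
  assumes "prob_space M" and "nonatomic M" and "is_tree M T"
    and "0 < q" and "q < 1"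
    and "0 < f" and "0 < h" and "h \<le> f powr q"
  shows "Bellman_q M T q f h = ennreal (h * omega_q q (f powr q / h))"
proof -
  obtain C where C: "tree_with M T C" using assms(3) by (auto simp: is_tree_def)
  interpret tree_ps M T C
    using assms(1) C by (simp add: tree_ps_def tree_ps_axioms_def)
  show ?thesis using main assms by blast
qed


end
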